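(* Let $\Bbbk$ be a field and let $A=\bigoplus_{i\ge 0}A_i$ be a regular graded $\Bbbk$-algebra with $A_0=\Bbbk$. Let $M=\bigoplus_{i\ge0}M_i$ be a finitely generated graded $A$-module which is free, and let $r=r(M,A)$. Let $g_1,\dots,g_r\in M$ be homogeneous elements which are $A$-independent. Then \[\sum_{i=1}^r \deg(g_i)\ \ge\ s(M,A),\] with equality if and only if $g_1,\dots,g_r$ generate $M$ as an $A$-module (in which case they form a basis of $M$).
   Context: For a graded $\Bbbk$-algebra $A$ with $A_0=\Bbbk$ and a finitely generated graded $A$-module $M$, the Hilbert series are $H(A,t)=\sum_i\dim_\Bbbk(A_i)t^i$ and $H(M,t)=\sum_i \dim_\Bbbk(M_i)t^i$. Expand the quotient about $t=1$: $H(M,t)/H(A,t)=a_0+a_1(t-1)+\cdots$. The rank is $r(M,A)=a_0$ and the $s$-invariant is $s(M,A)=a_1$. Elements $g_1,\dots,g_r$ are $A$-independent if $\sum a_ig_i=0$ with $a_i\in A$ implies all $a_i=0$. *)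

theory Defs
  imports Complex_Main
begin

definition graded_decomposition :: "(nat \<Rightarrow> 'm::ab_group_add set) \<Rightarrow> bool" where
  "graded_decomposition G \<longleftrightarrow>
     (\<forall>i. 0 \<in> G i \<and> (\<forall>x\<in>G i. \<forall>y\<in>G i. x + y \<in> G i \<and> - x \<in> G i)) \<and>
     (\<forall>x. \<exists>!c. (\<forall>i. c i \<in> G i) \<and> finite {i. c i \<noteq> 0} \<and> x = (\<Sum>i\<in>{i. c i \<noteq> 0}. c i))"

definition connected_graded_algebra ::
    "('k::field \<Rightarrow> 'a::comm_ring_1) \<Rightarrow> (nat \<Rightarrow> 'a set) \<Rightarrow> bool" where
  "connected_graded_algebra phi Agr \<longleftrightarrow>
     (\<forall>c d. phi (c + d) = phi c + phi d \<and> phi (c * d) = phi c * phi d) \<and> phi 1 = 1 \<and>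
     graded_decomposition Agr \<and>
     (\<forall>i j. \<forall>x\<in>Agr i. \<forall>y\<in>Agr j. x * y \<in> Agr (i + j)) \<and>
     Agr 0 = range phi"

definition monomial_in :: "nat \<Rightarrow> (nat \<Rightarrow> 'a::comm_ring_1) \<Rightarrow> (nat \<Rightarrow> nat) \<Rightarrow> 'a" where
  "monomial_in n x alpha = (\<Prod>j<n. x j ^ alpha j)"

definition exponents :: "nat \<Rightarrow> (nat \<Rightarrow> nat) set" where
  "exponents n = {alpha. \<forall>j\<ge>n. alpha j = 0}"

text \<open>Regular graded algebra: a polynomial algebra over k = A_0 on finitely many
  homogeneous generators of positive degree, i.e. the monomials in the generators
  form a k-basis of A.\<close>
definition regular_graded_algebra ::
    "('k::field \<Rightarrow> 'a::comm_ring_1) \<Rightarrow> (nat \<Rightarrow> 'a set) \<Rightarrow> bool" where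
  "regular_graded_algebra phi Agr \<longleftrightarrow>
     connected_graded_algebra phi Agr \<and>
     (\<exists>n x e. (\<forall>j<n. 0 < e j \<and> x j \<in> Agr (e j)) \<and>
        (\<forall>a. \<exists>F c. finite F \<and> F \<subseteq> exponents n \<and>
              a = (\<Sum>alpha\<in>F. phi (c alpha) * monomial_in n x alpha)) \<and>
        (\<forall>F c. finite F \<longrightarrow> F \<subseteq> exponents n \<longrightarrow>
              (\<Sum>alpha\<in>F. phi (c alpha) * monomial_in n x alpha) = 0 \<longrightarrow>
              (\<forall>alpha\<in>F. c alpha = 0)))"

definition graded_module ::
    "(nat \<Rightarrow> 'a::comm_ring_1 set) \<Rightarrow> ('a \<Rightarrow> 'm::ab_group_add \<Rightarrow> 'm) \<Rightarrow> (nat \<Rightarrow> 'm set) \<Rightarrow> bool" where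
  "graded_module Agr sm Mgr \<longleftrightarrow>
     module sm \<and> graded_decomposition Mgr \<and>
     (\<forall>i j. \<forall>a\<in>Agr i. \<forall>m\<in>Mgr j. sm a m \<in> Mgr (i + j))"

text \<open>Hilbert series (as a real function, for 0 < t < 1) of a graded object whose
  pieces are k-vector spaces under the scalar multiplication scl.\<close>
definition hilbert_series ::
    "('k::field \<Rightarrow> 'b::ab_group_add \<Rightarrow> 'b) \<Rightarrow> (nat \<Rightarrow> 'b set) \<Rightarrow> real \<Rightarrow> real" where
  "hilbert_series scl G t = (\<Sum>i. real (vector_space.dim scl (G i)) * t ^ i)"

definition hilbert_quotient ::
    "('k::field \<Rightarrow> 'a::comm_ring_1) \<Rightarrow> (nat \<Rightarrow> 'a set) \<Rightarrow> ('a \<Rightarrow> 'm::ab_group_add \<Rightarrow> 'm)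
       \<Rightarrow> (nat \<Rightarrow> 'm set) \<Rightarrow> real \<Rightarrow> real" where
  "hilbert_quotient phi Agr sm Mgr t =
     hilbert_series (\<lambda>c m. sm (phi c) m) Mgr t / hilbert_series (\<lambda>c a. phi c * a) Agr t"

text \<open>Writing H(M,t)/H(A,t) = a0 + a1 (t - 1) + ..., the rank r(M,A) = a0 and the
  s-invariant s(M,A) = a1 (coefficients of the expansion about t = 1, computed as
  limits from the region 0 < t < 1 where the series converge).\<close>
definition rank_inv ::
    "('k::field \<Rightarrow> 'a::comm_ring_1) \<Rightarrow> (nat \<Rightarrow> 'a set) \<Rightarrow> ('a \<Rightarrow> 'm::ab_group_add \<Rightarrow> 'm)
       \<Rightarrow> (nat \<Rightarrow> 'm set) \<Rightarrow> real" where
  "rank_inv phi Agr sm Mgr = Lim (at_left 1) (hilbert_quotient phi Agr sm Mgr)"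

definition s_inv ::
    "('k::field \<Rightarrow> 'a::comm_ring_1) \<Rightarrow> (nat \<Rightarrow> 'a set) \<Rightarrow> ('a \<Rightarrow> 'm::ab_group_add \<Rightarrow> 'm)
       \<Rightarrow> (nat \<Rightarrow> 'm set) \<Rightarrow> real" where
  "s_inv phi Agr sm Mgr =
     Lim (at_left 1) (\<lambda>t. (hilbert_quotient phi Agr sm Mgr t - rank_inv phi Agr sm Mgr) / (t - 1))"

end

theory Submission
  imports Defs "Jordan_Normal_Form.Determinant" "HOL-Real_Asymp.Real_Asymp"
begin

definition hcomp :: "(nat \<Rightarrow> 'm::ab_group_add set) \<Rightarrow> 'm \<Rightarrow> nat \<Rightarrow> 'm" where
  "hcomp G y = (THE c. (\<forall>i. c i \<in> G i) \<and> finite {i. c i \<noteq> 0} \<and> y = (\<Sum>i\<in>{i. c i \<noteq> 0}. c i))"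

context
  fixes G :: "nat \<Rightarrow> 'm::ab_group_add set"
  assumes GD: "graded_decomposition G"
begin

lemma G_zero: "0 \<in> G i" using GD unfolding graded_decomposition_def by blast

lemma G_add: "x \<in> G i \<Longrightarrow> y \<in> G i \<Longrightarrow> x + y \<in> G i"
  using GD unfolding graded_decomposition_def by blast

lemma G_neg: "x \<in> G i \<Longrightarrow> - x \<in> G i"
  using GD unfolding graded_decomposition_def by blast

lemma G_diff: "x \<in> G i \<Longrightarrow> y \<in> G i \<Longrightarrow> x - y \<in> G i"
  using G_add[of x i "-y"] G_neg[of y i] by simp

lemma G_sum: "(\<And>l. l \<in> L \<Longrightarrow> f l \<in> G i) \<Longrightarrow> (\<Sum>l\<in>L. f l) \<in> G i"
  by (induction L rule: infinite_finite_induct) (auto simp: G_zero G_add)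

lemma comp_props:
  "(\<forall>i. hcomp G y i \<in> G i) \<and> finite {i. hcomp G y i \<noteq> 0} \<and> y = (\<Sum>i\<in>{i. hcomp G y i \<noteq> 0}. hcomp G y i)"
proof -
  from GD have "\<exists>!c. (\<forall>i. c i \<in> G i) \<and> finite {i. c i \<noteq> 0} \<and> y = (\<Sum>i\<in>{i. c i \<noteq> 0}. c i)"
    unfolding graded_decomposition_def by blast
  then show ?thesis unfolding hcomp_def by (rule theI')
qed

lemma comp_in: "hcomp G y i \<in> G i" using comp_props by blast
lemma comp_fin: "finite {i. hcomp G y i \<noteq> 0}" using comp_props by blast

lemma comp_sum_super:
  assumes "finite S" "{i. hcomp G y i \<noteq> 0} \<subseteq> S"
  shows "y = (\<Sum>i\<in>S. hcomp G y i)"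
proof -
  have "y = (\<Sum>i\<in>{i. hcomp G y i \<noteq> 0}. hcomp G y i)" using comp_props by blast
  also have "\<dots> = (\<Sum>i\<in>S. hcomp G y i)"
    by (rule sum.mono_neutral_left) (use assms in auto)
  finally show ?thesis .
qed

lemma comp_unique:
  assumes c: "\<And>i. c i \<in> G i" and S: "finite S" and out: "\<And>i. i \<notin> S \<Longrightarrow> c i = 0"
    and y: "y = (\<Sum>i\<in>S. c i)"
  shows "hcomp G y = c"
proof -
  have fin: "finite {i. c i \<noteq> 0}" using S out by (metis (mono_tags) mem_Collect_eq rev_finite_subset subsetI)
  have "y = (\<Sum>i\<in>{i. c i \<noteq> 0}. c i)"
    unfolding y by (rule sum.mono_neutral_right) (use S out in auto)
  with c fin have P: "(\<forall>i. c i \<in> G i) \<and> finite {i. c i \<noteq> 0} \<and> y = (\<Sum>i\<in>{i. c i \<noteq> 0}. c i)" by blast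
  from GD have "\<exists>!c. (\<forall>i. c i \<in> G i) \<and> finite {i. c i \<noteq> 0} \<and> y = (\<Sum>i\<in>{i. c i \<noteq> 0}. c i)"
    unfolding graded_decomposition_def by blast
  with P comp_props[of y] show ?thesis by blast
qed

lemma comp_homog: "y \<in> G k \<Longrightarrow> hcomp G y = (\<lambda>i. if i = k then y else 0)"
  by (rule comp_unique[where S="{k}"]) (auto simp: G_zero)

lemma comp_zero: "hcomp G 0 = (\<lambda>i. 0)"
  using comp_homog[OF G_zero[of 0]] by auto

lemma comp_add: "hcomp G (y + z) i = hcomp G y i + hcomp G z i"
proof -
  let ?S = "{i. hcomp G y i \<noteq> 0} \<union> {i. hcomp G z i \<noteq> 0}"
  have fS: "finite ?S" using comp_fin by auto
  have "hcomp G (y + z) = (\<lambda>i. hcomp G y i + hcomp G z i)"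
  proof (rule comp_unique[where S="?S"])
    show "hcomp G y i + hcomp G z i \<in> G i" for i by (rule G_add[OF comp_in comp_in])
    show "y + z = (\<Sum>i\<in>?S. hcomp G y i + hcomp G z i)"
      using comp_sum_super[OF fS, of y] comp_sum_super[OF fS, of z] by (auto simp: sum.distrib)
  qed (use fS in auto)
  then show ?thesis by simp
qed

lemma comp_sum: "hcomp G (\<Sum>l\<in>L. f l) i = (\<Sum>l\<in>L. hcomp G (f l) i)"
  by (induction L rule: infinite_finite_induct) (auto simp: comp_zero comp_add)

lemma comp_neg: "hcomp G (- y) i = - hcomp G y i"
  using comp_add[of "-y" y i] by (simp add: comp_zero eq_neg_iff_add_eq_0)

lemma comp_diff: "hcomp G (y - z) i = hcomp G y i - hcomp G z i"
  using comp_add[of y "-z" i] comp_neg[of z i] by simp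

lemma comp_homog_sum:
  assumes "\<And>l. l \<in> L \<Longrightarrow> f l \<in> G (\<delta> l)" and finL: "finite L"
  shows "hcomp G (\<Sum>l\<in>L. f l) i = (\<Sum>l\<in>{l\<in>L. \<delta> l = i}. f l)"
proof -
  have "hcomp G (\<Sum>l\<in>L. f l) i = (\<Sum>l\<in>L. if \<delta> l = i then f l else 0)"
    unfolding comp_sum
  proof (intro sum.cong refl)
    fix l assume "l \<in> L"
    then show "hcomp G (f l) i = (if \<delta> l = i then f l else 0)"
      using comp_homog[OF assms(1)[OF \<open>l \<in> L\<close>]] by simp
  qed
  also have "\<dots> = (\<Sum>l\<in>{l\<in>L. \<delta> l = i}. f l)"
    using finL by (simp add: sum.inter_filter)
  finally show ?thesis .
qed

lemma homog_sum_zero: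
  assumes "finite S" "\<And>i. i \<in> S \<Longrightarrow> c i \<in> G i" "(\<Sum>i\<in>S. c i) = 0" "k \<in> S"
  shows "c k = 0"
proof -
  have "hcomp G (\<Sum>i\<in>S. c i) k = (\<Sum>i\<in>{i\<in>S. i = k}. c i)"
    by (rule comp_homog_sum) (use assms in auto)
  also have "{i\<in>S. i = k} = {k}" using assms by auto
  finally show ?thesis using assms by (simp add: comp_zero)
qed

end


definition wdeg :: "(nat \<Rightarrow> nat) \<Rightarrow> nat \<Rightarrow> (nat \<Rightarrow> nat) \<Rightarrow> nat" where
  "wdeg e n \<alpha> = (\<Sum>j<n. e j * \<alpha> j)"

locale RG =
  fixes phi :: "'k::field \<Rightarrow> 'a::comm_ring_1" and Agr :: "nat \<Rightarrow> 'a set"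
    and n :: nat and x :: "nat \<Rightarrow> 'a" and e :: "nat \<Rightarrow> nat"
  assumes conn: "connected_graded_algebra phi Agr"
    and xe: "\<And>j. j < n \<Longrightarrow> 0 < e j \<and> x j \<in> Agr (e j)"
    and span_mon: "\<And>a. \<exists>F c. finite F \<and> F \<subseteq> exponents n \<and> a = (\<Sum>\<alpha>\<in>F. phi (c \<alpha>) * monomial_in n x \<alpha>)"
    and indep_mon: "\<And>F c \<alpha>. finite F \<Longrightarrow> F \<subseteq> exponents n \<Longrightarrow>
        (\<Sum>\<alpha>\<in>F. phi (c \<alpha>) * monomial_in n x \<alpha>) = 0 \<Longrightarrow> \<alpha> \<in> F \<Longrightarrow> c \<alpha> = 0"
begin

lemma A_GD: "graded_decomposition Agr"
  using conn unfolding connected_graded_algebra_def by blast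

lemma A_mult: "a \<in> Agr i \<Longrightarrow> b \<in> Agr j \<Longrightarrow> a * b \<in> Agr (i + j)"
  using conn unfolding connected_graded_algebra_def by blast

lemma A0: "Agr 0 = range phi"
  using conn unfolding connected_graded_algebra_def by blast

lemma phi_add: "phi (c + d) = phi c + phi d"
  and phi_mult: "phi (c * d) = phi c * phi d"
  and phi_one: "phi 1 = 1"
  using conn unfolding connected_graded_algebra_def by blast+

lemma phi_zero: "phi 0 = 0"
  using phi_add[of 0 0] by simp

lemma phi_neg: "phi (- c) = - phi c"
  using phi_add[of c "-c"] by (simp add: phi_zero eq_neg_iff_add_eq_0 add.commute)

lemma phi_inv: "c \<noteq> 0 \<Longrightarrow> phi (inverse c) * phi c = 1"
  using phi_mult[of "inverse c" c] by (simp add: phi_one)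

lemma phi_nz: "c \<noteq> 0 \<Longrightarrow> phi c \<noteq> 0"
  using phi_inv[of c] by auto

lemma phi_A0: "phi c \<in> Agr 0" using A0 by auto

lemma one_A0: "1 \<in> Agr 0" using phi_A0[of 1] by (simp add: phi_one)

lemma A_prod: "(\<And>j. j \<in> J \<Longrightarrow> f j \<in> Agr (\<delta> j)) \<Longrightarrow> prod f J \<in> Agr (\<Sum>j\<in>J. \<delta> j)"
proof (induction J rule: infinite_finite_induct)
  case (insert j J)
  then show ?case using A_mult[of "f j" "\<delta> j" "prod f J" "sum \<delta> J"] by simp
qed (auto simp: one_A0)

lemma A_pow: "a \<in> Agr i \<Longrightarrow> a ^ k \<in> Agr (i * k)"
  using A_prod[of "{..<k}" "\<lambda>_. a" "\<lambda>_. i"] by (simp add: mult.commute)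

lemma mon_in: "monomial_in n x \<alpha> \<in> Agr (wdeg e n \<alpha>)"
  unfolding monomial_in_def wdeg_def
  by (rule A_prod) (use xe A_pow in auto)

lemma mon_nz: "\<alpha> \<in> exponents n \<Longrightarrow> monomial_in n x \<alpha> \<noteq> 0"
  using indep_mon[of "{\<alpha>}" "\<lambda>_. 1" \<alpha>] by (auto simp: phi_one)

lemma mon_eq: "\<alpha> \<in> exponents n \<Longrightarrow> \<beta> \<in> exponents n \<Longrightarrow> monomial_in n x \<alpha> = monomial_in n x \<beta> \<Longrightarrow> \<alpha> = \<beta>"
proof (rule ccontr)
  assume a: "\<alpha> \<in> exponents n" "\<beta> \<in> exponents n" "monomial_in n x \<alpha> = monomial_in n x \<beta>" "\<alpha> \<noteq> \<beta>"
  have "(\<Sum>\<gamma>\<in>{\<alpha>,\<beta>}. phi (if \<gamma> = \<alpha> then 1 else -1) * monomial_in n x \<gamma>) = 0"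
    using a by (simp add: phi_one phi_neg)
  from indep_mon[OF _ _ this, of \<alpha>] a show False by auto
qed

lemma exps_fin: "finite {\<alpha>\<in>exponents n. wdeg e n \<alpha> \<le> k}"
  and exps_card: "card {\<alpha>\<in>exponents n. wdeg e n \<alpha> \<le> k} \<le> (k+1)^n"
proof -
  let ?S = "{\<alpha>\<in>exponents n. wdeg e n \<alpha> \<le> k}"
  let ?T = "PiE {..<n} (\<lambda>_. {..k})"
  have inj: "inj_on (\<lambda>\<alpha>. restrict \<alpha> {..<n}) ?S"
  proof
    fix \<alpha> \<beta> assume "\<alpha> \<in> ?S" "\<beta> \<in> ?S" and eq: "restrict \<alpha> {..<n} = restrict \<beta> {..<n}"
    show "\<alpha> = \<beta>"
    proof
      fix j show "\<alpha> j = \<beta> j"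
      proof (cases "j < n")
        case True then show ?thesis using fun_cong[OF eq, of j] by simp
      next
        case False then show ?thesis using \<open>\<alpha> \<in> ?S\<close> \<open>\<beta> \<in> ?S\<close> by (auto simp: exponents_def)
      qed
    qed
  qed
  have sub: "(\<lambda>\<alpha>. restrict \<alpha> {..<n}) ` ?S \<subseteq> ?T"
  proof clarify
    fix \<alpha> assume \<alpha>: "\<alpha> \<in> exponents n" "wdeg e n \<alpha> \<le> k"
    show "restrict \<alpha> {..<n} \<in> ?T"
    proof (rule PiE_I)
      fix j assume j: "j \<in> {..<n}"
      have "\<alpha> j \<le> e j * \<alpha> j" using xe[of j] j by simp
      also have "\<dots> \<le> wdeg e n \<alpha>" unfolding wdeg_def
        by (rule member_le_sum) (use j in auto)
      finally show "restrict \<alpha> {..<n} j \<in> {..k}" using \<alpha> j by simp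
    qed auto
  qed
  have fT: "finite ?T" by (rule finite_PiE) auto
  have cT: "card ?T = (k+1)^n" by (simp add: card_PiE)
  show "finite ?S" using finite_imageD[OF finite_subset[OF sub fT] inj] .
  show "card ?S \<le> (k+1)^n"
    using card_inj_on_le[OF inj sub fT] cT by simp
qed

definition Fam :: "nat \<Rightarrow> (nat \<Rightarrow> nat) set" where
  "Fam k = {\<alpha>\<in>exponents n. wdeg e n \<alpha> = k}"

definition aa :: "nat \<Rightarrow> nat" where "aa k = card (Fam k)"

lemma Fam_fin: "finite (Fam k)"
  unfolding Fam_def by (rule finite_subset[OF _ exps_fin[of k]]) auto

lemma aa_bound: "aa k \<le> (k+1)^n"
  unfolding aa_def Fam_def
  by (rule order.trans[OF card_mono[OF exps_fin[of k]] exps_card]) auto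

lemma aa0: "aa 0 \<ge> 1"
proof -
  have "(\<lambda>_. 0) \<in> Fam 0" by (simp add: Fam_def exponents_def wdeg_def)
  then have "Fam 0 \<noteq> {}" by auto
  then show ?thesis unfolding aa_def using Fam_fin[of 0] by (simp add: Suc_le_eq card_gt_0_iff)
qed

end


lemma module_mult: "Modules.module ((*) :: 'a::comm_ring_1 \<Rightarrow> 'a \<Rightarrow> 'a)"
  by unfold_locales (auto simp: algebra_simps)

lemma (in Modules.module) span_fam: fixes N :: nat shows "span (f ` {..<N}) = {(\<Sum>j<N. a j *s f j) | a. True}"
proof
  let ?R = "{(\<Sum>j<N. a j *s f j) | a. True}"
  show "span (f ` {..<N}) \<subseteq> ?R"
  proof (rule span_minimal)
    show "f ` {..<N} \<subseteq> ?R"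
    proof (rule subsetI)
      fix y assume "y \<in> f ` {..<N}"
      then obtain k where k: "k < N" and yk: "y = f k" by auto
      have "(\<Sum>j<N. (if j = k then 1 else 0) *s f j) = (\<Sum>j<N. if j = k then f k else 0)"
        by (rule sum.cong) auto
      also have "\<dots> = f k" using k sum.delta[of "{..<N}" k "\<lambda>_. f k"] by simp
      finally have "(\<Sum>j<N. (if j = k then 1 else 0) *s f j) = f k" .
      then have "\<exists>a. f k = (\<Sum>j<N. a j *s f j)" by (intro exI[of _ "\<lambda>j. if j = k then 1 else 0"]) (rule sym)
      then show "y \<in> ?R" using yk by simp
    qed
    show "subspace ?R" unfolding subspace_def
    proof (intro conjI ballI allI)
      show "0 \<in> ?R" by (rule CollectI, rule exI[of _ "\<lambda>_. 0"]) simp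
      fix y z assume "y \<in> ?R" "z \<in> ?R"
      then obtain a b where "y = (\<Sum>j<N. a j *s f j)" "z = (\<Sum>j<N. b j *s f j)" by blast
      then have "y + z = (\<Sum>j<N. (a j + b j) *s f j)" by (simp add: scale_left_distrib sum.distrib)
      then show "y + z \<in> ?R" by (auto intro!: exI[of _ "\<lambda>j. a j + b j"])
    next
      fix c y assume "y \<in> ?R"
      then obtain a where "y = (\<Sum>j<N. a j *s f j)" by blast
      then have "c *s y = (\<Sum>j<N. (c * a j) *s f j)" by (simp add: scale_sum_right)
      then show "c *s y \<in> ?R" by (auto intro!: exI[of _ "\<lambda>j. c * a j"])
    qed
  qed
  show "?R \<subseteq> span (f ` {..<N})"
  proof
    fix y assume "y \<in> ?R"
    then obtain a where y: "y = (\<Sum>j<N. a j *s f j)" by blast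
    have "(\<Sum>j<N. a j *s f j) \<in> span (f ` {..<N})"
      by (rule span_sum, rule span_scale, rule span_base) auto
    then show "y \<in> span (f ` {..<N})" using y by simp
  qed
qed

lemma (in vector_space) family_indep:
  assumes P: "finite P" and H: "\<And>f. (\<Sum>p\<in>P. f p *s v p) = 0 \<Longrightarrow> \<forall>p\<in>P. f p = 0"
  shows "inj_on v P" "independent (v ` P)"
proof -
  show inj: "inj_on v P"
  proof (rule inj_onI, rule ccontr)
    fix p q assume pq: "p \<in> P" "q \<in> P" "v p = v q" and ne: "p \<noteq> q"
    define f where "f = (\<lambda>z. if z = p then 1 else if z = q then -1 else (0::'a))"
    have "(\<Sum>z\<in>P. f z *s v z) = (\<Sum>z\<in>{p,q}. f z *s v z)"
      by (rule sum.mono_neutral_right) (use P pq in \<open>auto simp: f_def\<close>)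
    also have "\<dots> = f p *s v p + f q *s v q" using ne by simp
    also have "\<dots> = v p - v q" using ne by (simp add: f_def)
    also have "\<dots> = 0" using pq(3) by simp
    finally have "\<forall>z\<in>P. f z = 0" by (rule H)
    then have "f p = 0" using pq(1) by blast
    then show False by (simp add: f_def)
  qed
  show "independent (v ` P)"
  proof (rule independent_if_scalars_zero)
    show "finite (v ` P)" using P by simp
    fix f y assume s: "(\<Sum>y\<in>v ` P. f y *s y) = 0" and y: "y \<in> v ` P"
    have "(\<Sum>p\<in>P. f (v p) *s v p) = 0" using s by (simp add: sum.reindex[OF inj])
    from H[OF this] y show "f y = 0" by auto
  qed
qed

locale RGM = RG phi Agr n x e
  for phi :: "'k::field \<Rightarrow> 'a::comm_ring_1" and Agr n x e +
  fixes sm :: "'a \<Rightarrow> 'm::ab_group_add \<Rightarrow> 'm" and Mgr :: "nat \<Rightarrow> 'm set"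
  assumes gm: "graded_module Agr sm Mgr"
begin

lemma M_module: "Modules.module sm" using gm unfolding graded_module_def by blast

sublocale M: Modules.module sm by (rule M_module)

lemma M_GD: "graded_decomposition Mgr" using gm unfolding graded_module_def by blast

lemma sm_in: "a \<in> Agr i \<Longrightarrow> m \<in> Mgr j \<Longrightarrow> sm a m \<in> Mgr (i + j)"
  using gm unfolding graded_module_def by blast

lemma V_vs: "vector_space (\<lambda>c m. sm (phi c) m)"
  unfolding vector_space_def
  by (simp add: phi_add phi_mult phi_one M.scale_right_distrib M.scale_left_distrib)

sublocale V: vector_space "\<lambda>c m. sm (phi c) m" by (rule V_vs)

lemma V_subspace: "V.subspace (Mgr i)"
  unfolding V.subspace_def
  using G_zero[OF M_GD] G_add[OF M_GD] sm_in[OF phi_A0] by auto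

lemma comp_sm_homog:
  assumes m: "m \<in> Mgr l"
  shows "hcomp Mgr (sm a m) i = (if l \<le> i then sm (hcomp Agr a (i - l)) m else 0)"
proof -
  let ?S = "insert (i - l) {j. hcomp Agr a j \<noteq> 0}"
  have fS: "finite ?S" using comp_fin[OF A_GD] by simp
  have "a = (\<Sum>j\<in>?S. hcomp Agr a j)" by (rule comp_sum_super[OF A_GD fS]) auto
  then have "sm a m = (\<Sum>j\<in>?S. sm (hcomp Agr a j) m)"
    by (metis M.scale_sum_left)
  then have "hcomp Mgr (sm a m) i = (\<Sum>j\<in>{j\<in>?S. j + l = i}. sm (hcomp Agr a j) m)"
    using comp_homog_sum[OF M_GD, of ?S "\<lambda>j. sm (hcomp Agr a j) m" "\<lambda>j. j + l" i]
    using sm_in[OF comp_in[OF A_GD] m] fS by simp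
  also have "\<dots> = (if l \<le> i then sm (hcomp Agr a (i - l)) m else 0)"
  proof (cases "l \<le> i")
    case True
    then have "{j\<in>?S. j + l = i} = {i - l}" by auto
    then show ?thesis using True by simp
  next
    case False
    then have "{j\<in>?S. j + l = i} = {}" by auto
    then show ?thesis using False by simp
  qed
  finally show ?thesis .
qed

definition findep :: "nat \<Rightarrow> (nat \<Rightarrow> 'm) \<Rightarrow> bool" where
  "findep R b \<longleftrightarrow> (\<forall>a. (\<Sum>j<R. sm (a j) (b j)) = 0 \<longrightarrow> (\<forall>j<R. a j = 0))"

definition homog :: "nat \<Rightarrow> (nat \<Rightarrow> 'm) \<Rightarrow> (nat \<Rightarrow> nat) \<Rightarrow> bool" where
  "homog R b \<beta> \<longleftrightarrow> (\<forall>j<R. b j \<in> Mgr (\<beta> j))"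

definition PP :: "(nat \<Rightarrow> nat) \<Rightarrow> nat \<Rightarrow> nat \<Rightarrow> (nat \<times> (nat \<Rightarrow> nat)) set" where
  "PP \<beta> R i = Sigma {..<R} (\<lambda>j. {\<alpha>\<in>exponents n. wdeg e n \<alpha> + \<beta> j = i})"

definition BBf :: "(nat \<Rightarrow> 'm) \<Rightarrow> nat \<times> (nat \<Rightarrow> nat) \<Rightarrow> 'm" where
  "BBf b = (\<lambda>(j, \<alpha>). sm (monomial_in n x \<alpha>) (b j))"

lemma PP_fin: "finite (PP \<beta> R i)"
  unfolding PP_def
  by (rule finite_SigmaI) (auto intro: finite_subset[OF _ exps_fin[of i]])

lemma card_PP: "card (PP \<beta> R i) = (\<Sum>j<R. if \<beta> j \<le> i then aa (i - \<beta> j) else 0)"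
proof -
  have "card (PP \<beta> R i) = (\<Sum>j<R. card {\<alpha>\<in>exponents n. wdeg e n \<alpha> + \<beta> j = i})"
    unfolding PP_def by (rule card_SigmaI) (auto intro: finite_subset[OF _ exps_fin[of i]])
  also have "\<dots> = (\<Sum>j<R. if \<beta> j \<le> i then aa (i - \<beta> j) else 0)"
  proof (rule sum.cong[OF refl])
    fix j
    show "card {\<alpha>\<in>exponents n. wdeg e n \<alpha> + \<beta> j = i} = (if \<beta> j \<le> i then aa (i - \<beta> j) else 0)"
    proof (cases "\<beta> j \<le> i")
      case True
      then have "{\<alpha>\<in>exponents n. wdeg e n \<alpha> + \<beta> j = i} = Fam (i - \<beta> j)"
        unfolding Fam_def by auto
      then show ?thesis using True by (simp add: aa_def)
    next
      case False
      then have "{\<alpha>\<in>exponents n. wdeg e n \<alpha> + \<beta> j = i} = {}" by auto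
      then show ?thesis using False by simp
    qed
  qed
  finally show ?thesis .
qed

lemma BB_props:
  assumes hom: "homog R b \<beta>" and ind: "findep R b"
  shows "inj_on (BBf b) (PP \<beta> R i)" "V.independent (BBf b ` PP \<beta> R i)"
    "BBf b ` PP \<beta> R i \<subseteq> Mgr i"
proof -
  have H: "\<forall>p\<in>PP \<beta> R i. f p = 0" if s: "(\<Sum>p\<in>PP \<beta> R i. sm (phi (f p)) (BBf b p)) = 0" for f
  proof -
    let ?F = "\<lambda>j. {\<alpha>\<in>exponents n. wdeg e n \<alpha> + \<beta> j = i}"
    have fF: "finite (?F j)" for j by (rule finite_subset[OF _ exps_fin[of i]]) auto
    have "(\<Sum>p\<in>PP \<beta> R i. sm (phi (f p)) (BBf b p))
        = (\<Sum>j<R. \<Sum>\<alpha>\<in>?F j. sm (phi (f (j, \<alpha>))) (BBf b (j, \<alpha>)))"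
      unfolding PP_def by (subst sum.Sigma) (auto simp: fF split_def)
    also have "\<dots> = (\<Sum>j<R. sm (\<Sum>\<alpha>\<in>?F j. phi (f (j, \<alpha>)) * monomial_in n x \<alpha>) (b j))"
      by (simp add: BBf_def M.scale_sum_left)
    finally have "(\<Sum>j<R. sm (\<Sum>\<alpha>\<in>?F j. phi (f (j, \<alpha>)) * monomial_in n x \<alpha>) (b j)) = 0"
      using s by simp
    then have z: "\<forall>j<R. (\<Sum>\<alpha>\<in>?F j. phi (f (j, \<alpha>)) * monomial_in n x \<alpha>) = 0"
      using ind unfolding findep_def
      by (elim allE[of _ "\<lambda>j. \<Sum>\<alpha>\<in>?F j. phi (f (j, \<alpha>)) * monomial_in n x \<alpha>"]) simp
    show ?thesis
    proof
      fix p assume "p \<in> PP \<beta> R i"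
      then obtain j \<alpha> where p: "p = (j, \<alpha>)" "j < R" "\<alpha> \<in> ?F j" unfolding PP_def by auto
      from indep_mon[OF fF _ z[rule_format, OF p(2)] p(3)] p show "f p = 0" by auto
    qed
  qed
  from V.family_indep[OF PP_fin H]
  show "inj_on (BBf b) (PP \<beta> R i)" "V.independent (BBf b ` PP \<beta> R i)" by blast+
  show "BBf b ` PP \<beta> R i \<subseteq> Mgr i"
  proof clarify
    fix j \<alpha> assume "(j, \<alpha>) \<in> PP \<beta> R i"
    then have j: "j < R" "wdeg e n \<alpha> + \<beta> j = i" unfolding PP_def by auto
    show "BBf b (j, \<alpha>) \<in> Mgr i"
      unfolding BBf_def using sm_in[OF mon_in, of "b j" "\<beta> j" \<alpha>] hom j unfolding homog_def by auto
  qed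
qed

lemma comp_A_expand:
  assumes "finite F" "F \<subseteq> exponents n"
  shows "hcomp Agr (\<Sum>\<alpha>\<in>F. phi (c \<alpha>) * monomial_in n x \<alpha>) k
         = (\<Sum>\<alpha>\<in>{\<alpha>\<in>F. wdeg e n \<alpha> = k}. phi (c \<alpha>) * monomial_in n x \<alpha>)"
  by (rule comp_homog_sum[OF A_GD]) (use A_mult[OF phi_A0 mon_in] assms in auto)

lemma BB_span:
  assumes hom: "homog R b \<beta>" and sp: "M.span (b ` {..<R}) = UNIV" and m: "m \<in> Mgr i"
  shows "m \<in> V.span (BBf b ` PP \<beta> R i)"
proof -
  have "m \<in> M.span (b ` {..<R})" using sp by simp
  then obtain a where a: "m = (\<Sum>j<R. sm (a j) (b j))" unfolding M.span_fam by blast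
  have "m = hcomp Mgr m i" using comp_homog[OF M_GD m] by simp
  also have "\<dots> = (\<Sum>j<R. hcomp Mgr (sm (a j) (b j)) i)"
    unfolding a by (rule comp_sum[OF M_GD])
  also have "\<dots> = (\<Sum>j<R. if \<beta> j \<le> i then sm (hcomp Agr (a j) (i - \<beta> j)) (b j) else 0)"
    using hom unfolding homog_def by (intro sum.cong refl comp_sm_homog) auto
  finally have m': "m = \<dots>" .
  show ?thesis unfolding m'
  proof (rule V.span_sum)
    fix j assume j: "j \<in> {..<R}"
    show "(if \<beta> j \<le> i then sm (hcomp Agr (a j) (i - \<beta> j)) (b j) else 0) \<in> V.span (BBf b ` PP \<beta> R i)"
    proof (cases "\<beta> j \<le> i")
      case True
      obtain F c where F: "finite F" "F \<subseteq> exponents n" "a j = (\<Sum>\<alpha>\<in>F. phi (c \<alpha>) * monomial_in n x \<alpha>)"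
        using span_mon by blast
      have "sm (hcomp Agr (a j) (i - \<beta> j)) (b j)
          = sm (\<Sum>\<alpha>\<in>{\<alpha>\<in>F. wdeg e n \<alpha> = i - \<beta> j}. phi (c \<alpha>) * monomial_in n x \<alpha>) (b j)"
        unfolding F(3) comp_A_expand[OF F(1,2)] ..
      also have "\<dots> = (\<Sum>\<alpha>\<in>{\<alpha>\<in>F. wdeg e n \<alpha> = i - \<beta> j}. sm (phi (c \<alpha>)) (BBf b (j, \<alpha>)))"
        by (simp add: M.scale_sum_left BBf_def)
      also have "\<dots> \<in> V.span (BBf b ` PP \<beta> R i)"
      proof (rule V.span_sum)
        fix \<alpha> assume \<alpha>: "\<alpha> \<in> {\<alpha>\<in>F. wdeg e n \<alpha> = i - \<beta> j}"
        then have "(j, \<alpha>) \<in> PP \<beta> R i" using F(2) True j unfolding PP_def by auto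
        then show "sm (phi (c \<alpha>)) (BBf b (j, \<alpha>)) \<in> V.span (BBf b ` PP \<beta> R i)"
          by (intro V.span_scale V.span_base) auto
      qed
      finally show ?thesis using True by simp
    qed (simp add: V.span_zero)
  qed
qed

lemma dim_hbasis:
  assumes hom: "homog R b \<beta>" and ind: "findep R b" and sp: "M.span (b ` {..<R}) = UNIV"
  shows "V.dim (Mgr i) = (\<Sum>j<R. if \<beta> j \<le> i then aa (i - \<beta> j) else 0)"
proof -
  note P = BB_props[OF hom ind, of i]
  have "V.span (BBf b ` PP \<beta> R i) = Mgr i"
  proof
    show "V.span (BBf b ` PP \<beta> R i) \<subseteq> Mgr i" by (rule V.span_minimal[OF P(3) V_subspace])
    show "Mgr i \<subseteq> V.span (BBf b ` PP \<beta> R i)" using BB_span[OF hom sp] by blast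
  qed
  also have "\<dots> = V.span (Mgr i)" by (metis V.span_eq_iff V_subspace)
  finally have "V.dim (Mgr i) = card (BBf b ` PP \<beta> R i)"
    by (rule V.dim_eq_card[OF _ P(2)])
  also have "\<dots> = card (PP \<beta> R i)" by (rule card_image[OF P(1)])
  finally show ?thesis by (simp add: card_PP)
qed

lemma card_indep_le:
  assumes hom: "homog R b \<beta>" and ind: "findep R b" and sp: "M.span (b ` {..<R}) = UNIV"
    and homg: "homog r g d" and indg: "findep r g"
  shows "(\<Sum>j<r. if d j \<le> i then aa (i - d j) else 0) \<le> (\<Sum>j<R. if \<beta> j \<le> i then aa (i - \<beta> j) else 0)"
proof -
  note P = BB_props[OF hom ind, of i] and Q = BB_props[OF homg indg, of i]
  have "BBf g ` PP d r i \<subseteq> V.span (BBf b ` PP \<beta> R i)"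
    using Q(3) BB_span[OF hom sp] by blast
  from V.independent_span_bound[OF _ Q(2) this] PP_fin
  have "card (BBf g ` PP d r i) \<le> card (BBf b ` PP \<beta> R i)" by auto
  then show ?thesis using card_image[OF P(1)] card_image[OF Q(1)] by (simp add: card_PP)
qed

end


lemma summable_poly_geom:
  fixes t :: real assumes t: "0 < t" "t < 1"
  shows "summable (\<lambda>i. real (Suc i) ^ k * t ^ i)"
proof -
  let ?c = "(1 + t) / 2"
  have "(\<lambda>i. (real i + 2) / (real i + 1)) \<longlonglongrightarrow> 1" by real_asymp
  then have "(\<lambda>i. ((real i + 2) / (real i + 1)) ^ k) \<longlonglongrightarrow> 1 ^ k" by (rule tendsto_power)
  moreover have "1 < ?c / t" using t by (simp add: field_simps)
  ultimately have "eventually (\<lambda>i. ((real i + 2) / (real i + 1)) ^ k < ?c / t) sequentially"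
    by (simp add: order_tendstoD(2))
  then obtain N where N: "\<And>i. i \<ge> N \<Longrightarrow> ((real i + 2) / (real i + 1)) ^ k < ?c / t"
    unfolding eventually_sequentially by blast
  show ?thesis
  proof (rule summable_ratio_test[of ?c N])
    show "?c < 1" using t by simp
    fix i assume i: "N \<le> i"
    have pos: "0 < real (Suc i) ^ k * t ^ i" using t by simp
    have "real (Suc (Suc i)) ^ k * t ^ Suc i = ((real i + 2) / (real i + 1)) ^ k * t * (real (Suc i) ^ k * t ^ i)"
      by (simp add: power_divide field_simps)
    also have "\<dots> \<le> (?c / t) * t * (real (Suc i) ^ k * t ^ i)"
      using N[OF i] t pos by (intro mult_right_mono) auto
    also have "\<dots> = ?c * (real (Suc i) ^ k * t ^ i)" using t by simp
    finally show "norm (real (Suc (Suc i)) ^ k * t ^ Suc i) \<le> ?c * norm (real (Suc i) ^ k * t ^ i)"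
      using t by simp
  qed
qed

definition HA :: "(nat \<Rightarrow> nat) \<Rightarrow> real \<Rightarrow> real" where
  "HA a t = (\<Sum>i. real (a i) * t ^ i)"

lemma shift_sums:
  fixes t :: real
  assumes s: "summable (\<lambda>i. real (a i) * t ^ i)"
  shows "(\<lambda>i. real (if b \<le> i then a (i - b) else 0) * t ^ i) sums (t ^ b * HA a t)"
proof -
  let ?g = "\<lambda>i. real (if b \<le> i then a (i - b) else 0) * t ^ i"
  have "(\<lambda>i. t ^ b * (real (a i) * t ^ i)) sums (t ^ b * HA a t)"
    unfolding HA_def by (rule sums_mult[OF summable_sums[OF s]])
  moreover have "(\<lambda>i. ?g (i + b)) = (\<lambda>i. t ^ b * (real (a i) * t ^ i))"
    by (auto simp: power_add mult_ac)
  ultimately have "(\<lambda>i. ?g (i + b)) sums (t ^ b * HA a t)" by metis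
  then have "?g sums (t ^ b * HA a t + (\<Sum>i<b. ?g i))" by (rule sums_iff_shift[THEN iffD1])
  moreover have "(\<Sum>i<b. ?g i) = 0" by (intro sum.neutral) auto
  ultimately show ?thesis by simp
qed

lemma multi_sums:
  fixes t :: real
  assumes s: "summable (\<lambda>i. real (a i) * t ^ i)"
  shows "(\<lambda>i. real (\<Sum>j<R. if d j \<le> i then a (i - d j) else 0) * t ^ i) sums ((\<Sum>j<R. t ^ d j) * HA a t)"
proof -
  have "(\<lambda>i. \<Sum>j<R. real (if d j \<le> i then a (i - d j) else 0) * t ^ i) sums (\<Sum>j<R. t ^ d j * HA a t)"
    by (rule sums_sum) (rule shift_sums[OF s])
  then show ?thesis by (simp add: sum_distrib_right)
qed

context RG
begin

lemma aa_summable: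
  fixes t :: real assumes t: "0 < t" "t < 1"
  shows "summable (\<lambda>i. real (aa i) * t ^ i)"
proof (rule summable_comparison_test[OF _ summable_poly_geom[OF t, of n]])
  show "\<exists>N. \<forall>i\<ge>N. norm (real (aa i) * t ^ i) \<le> real (Suc i) ^ n * t ^ i"
  proof (intro exI allI impI)
    fix i :: nat
    have "real (aa i) \<le> real (Suc i) ^ n" using aa_bound[of i] by (metis Suc_eq_plus1 of_nat_le_iff of_nat_power)
    then show "norm (real (aa i) * t ^ i) \<le> real (Suc i) ^ n * t ^ i"
      using t by (simp add: mult_right_mono)
  qed
qed

lemma HA_pos:
  fixes t :: real assumes t: "0 < t" "t < 1"
  shows "HA aa t \<ge> 1"
proof -
  have "(\<Sum>i<1. real (aa i) * t ^ i) \<le> HA aa t"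
    unfolding HA_def by (rule sum_le_suminf[OF aa_summable[OF t]]) (use t in auto)
  then show ?thesis using aa0 by simp
qed

lemma RGM_self: "RGM phi Agr n x e (*) Agr"
proof -
  have "graded_module Agr (*) Agr"
    unfolding graded_module_def using module_mult A_GD A_mult by blast
  then show ?thesis by unfold_locales
qed

end

context RGM
begin

definition hbasis :: "nat \<Rightarrow> (nat \<Rightarrow> 'm) \<Rightarrow> (nat \<Rightarrow> nat) \<Rightarrow> bool" where
  "hbasis R b \<beta> \<longleftrightarrow> homog R b \<beta> \<and> findep R b \<and> M.span (b ` {..<R}) = UNIV"

lemma dim_A: "vector_space.dim (\<lambda>c a. phi c * a) (Agr i) = aa i"
proof -
  interpret AM: RGM phi Agr n x e "(*)" Agr by (rule RGM_self)
  have "AM.hbasis 1 (\<lambda>_. 1) (\<lambda>_. 0)"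
    unfolding AM.hbasis_def AM.homog_def AM.findep_def
  proof (intro conjI allI impI)
    show "1 \<in> Agr 0" by (rule one_A0)
    show "AM.M.span ((\<lambda>_. 1) ` {..<1::nat}) = UNIV"
    proof -
      have "y \<in> AM.M.span ((\<lambda>_. 1) ` {..<1::nat})" for y :: 'a
        unfolding AM.M.span_fam by (intro CollectI exI[of _ "\<lambda>_. y"]) simp
      then show ?thesis by auto
    qed
  qed auto
  then show ?thesis
    using AM.dim_hbasis[of 1 "\<lambda>_. 1" "\<lambda>_. 0" i] unfolding AM.hbasis_def by simp
qed

lemma HA_eq: "hilbert_series (\<lambda>c a. phi c * a) Agr t = HA aa t"
  unfolding hilbert_series_def HA_def dim_A ..

lemma HM_sums:
  fixes t :: real assumes t: "0 < t" "t < 1" and hb: "hbasis R b \<beta>"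
  shows "(\<lambda>i. real (V.dim (Mgr i)) * t ^ i) sums ((\<Sum>j<R. t ^ \<beta> j) * HA aa t)"
  using multi_sums[OF aa_summable[OF t], where R=R and d=\<beta>] dim_hbasis[of R b \<beta>] hb
  unfolding hbasis_def by simp

lemma HQ_eq:
  fixes t :: real assumes t: "0 < t" "t < 1" and hb: "hbasis R b \<beta>"
  shows "hilbert_quotient phi Agr sm Mgr t = (\<Sum>j<R. t ^ \<beta> j)"
proof -
  have "hilbert_series (\<lambda>c m. sm (phi c) m) Mgr t = (\<Sum>j<R. t ^ \<beta> j) * HA aa t"
    unfolding hilbert_series_def using sums_unique[OF HM_sums[OF t hb]] by simp
  then show ?thesis unfolding hilbert_quotient_def HA_eq using HA_pos[OF t] by simp
qed

end

lemma poly_lim: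
  fixes \<beta> :: "nat \<Rightarrow> nat"
  shows "((\<lambda>t::real. ((\<Sum>j<R. t ^ \<beta> j) - real R) / (t - 1)) \<longlongrightarrow> real (\<Sum>j<R. \<beta> j)) (at_left 1)"
proof -
  have "((\<lambda>t::real. \<Sum>j<R. \<Sum>k<\<beta> j. t ^ k) \<longlongrightarrow> (\<Sum>j<R. \<Sum>k<\<beta> j. 1 ^ k)) (at_left 1)"
    by (intro tendsto_intros)
  then have L: "((\<lambda>t::real. \<Sum>j<R. \<Sum>k<\<beta> j. t ^ k) \<longlongrightarrow> real (\<Sum>j<R. \<beta> j)) (at_left 1)"
    by simp
  have "eventually (\<lambda>t. t \<in> {0<..<1::real}) (at_left 1)" by (rule eventually_at_left_real) simp
  then have "eventually (\<lambda>t. (\<Sum>j<R. \<Sum>k<\<beta> j. t ^ k) = ((\<Sum>j<R. t ^ \<beta> j) - real R) / (t - 1)) (at_left (1::real))"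
  proof (rule eventually_mono)
    fix t :: real assume t: "t \<in> {0<..<1}"
    then have "t \<noteq> 1" by auto
    have "(\<Sum>j<R. \<Sum>k<\<beta> j. t ^ k) = (\<Sum>j<R. (t ^ \<beta> j - 1) / (t - 1))"
      using geometric_sum[OF \<open>t \<noteq> 1\<close>] by simp
    also have "\<dots> = ((\<Sum>j<R. t ^ \<beta> j) - real R) / (t - 1)"
      by (simp add: sum_divide_distrib[symmetric] sum_subtractf)
    finally show "(\<Sum>j<R. \<Sum>k<\<beta> j. t ^ k) = ((\<Sum>j<R. t ^ \<beta> j) - real R) / (t - 1)" .
  qed
  from tendsto_cong[OF this] L show ?thesis by simp
qed

lemma poly_lim0:
  fixes \<beta> :: "nat \<Rightarrow> nat"
  shows "((\<lambda>t::real. \<Sum>j<R. t ^ \<beta> j) \<longlongrightarrow> real R) (at_left 1)"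
proof -
  have "((\<lambda>t::real. \<Sum>j<R. t ^ \<beta> j) \<longlongrightarrow> (\<Sum>j<R. 1 ^ \<beta> j)) (at_left 1)"
    by (intro tendsto_intros)
  then show ?thesis by simp
qed

context RGM
begin

lemma rank_s:
  assumes hb: "hbasis R b \<beta>"
  shows "rank_inv phi Agr sm Mgr = real R" "s_inv phi Agr sm Mgr = real (\<Sum>j<R. \<beta> j)"
proof -
  have ev: "eventually (\<lambda>t. t \<in> {0<..<1::real}) (at_left 1)" by (rule eventually_at_left_real) simp
  have ev1: "eventually (\<lambda>t. (\<Sum>j<R. t ^ \<beta> j) = hilbert_quotient phi Agr sm Mgr t) (at_left 1)"
    using ev by (rule eventually_mono) (use HQ_eq[OF _ _ hb] in auto)
  have "(hilbert_quotient phi Agr sm Mgr \<longlongrightarrow> real R) (at_left 1)"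
    using tendsto_cong[OF ev1] poly_lim0[where R=R and \<beta>=\<beta>] by simp
  then show r: "rank_inv phi Agr sm Mgr = real R"
    unfolding rank_inv_def by (intro tendsto_Lim) (simp_all add: trivial_limit_at_left_real)
  have ev2: "eventually (\<lambda>t. ((\<Sum>j<R. t ^ \<beta> j) - real R) / (t - 1)
        = (hilbert_quotient phi Agr sm Mgr t - rank_inv phi Agr sm Mgr) / (t - 1)) (at_left 1)"
    using ev by (rule eventually_mono) (use HQ_eq[OF _ _ hb] r in auto)
  have "((\<lambda>t. (hilbert_quotient phi Agr sm Mgr t - rank_inv phi Agr sm Mgr) / (t - 1)) \<longlongrightarrow> real (\<Sum>j<R. \<beta> j)) (at_left 1)"
    using tendsto_cong[OF ev2] poly_lim[where R=R and \<beta>=\<beta>] by simp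
  then show "s_inv phi Agr sm Mgr = real (\<Sum>j<R. \<beta> j)"
    unfolding s_inv_def by (intro tendsto_Lim) (simp_all add: trivial_limit_at_left_real)
qed

lemma ineq_series:
  fixes t :: real assumes t: "0 < t" "t < 1" and hb: "hbasis R b \<beta>"
    and homg: "homog r g d" and indg: "findep r g"
  shows "(\<Sum>j<r. t ^ d j) \<le> (\<Sum>j<R. t ^ \<beta> j)"
proof -
  have "(\<Sum>j<r. t ^ d j) * HA aa t \<le> (\<Sum>j<R. t ^ \<beta> j) * HA aa t"
  proof (rule sums_le[OF _ multi_sums[OF aa_summable[OF t]] multi_sums[OF aa_summable[OF t]]])
    fix i
    show "real (\<Sum>j<r. if d j \<le> i then aa (i - d j) else 0) * t ^ i
        \<le> real (\<Sum>j<R. if \<beta> j \<le> i then aa (i - \<beta> j) else 0) * t ^ i"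
    proof (rule mult_right_mono)
      have "(\<Sum>j<r. if d j \<le> i then aa (i - d j) else 0) \<le> (\<Sum>j<R. if \<beta> j \<le> i then aa (i - \<beta> j) else 0)"
        using card_indep_le[of R b \<beta> r g d i] hb homg indg unfolding hbasis_def by blast
      then show "real (\<Sum>j<r. if d j \<le> i then aa (i - d j) else 0) \<le> real (\<Sum>j<R. if \<beta> j \<le> i then aa (i - \<beta> j) else 0)"
        by (simp only: of_nat_le_iff)
    qed (use t in simp)
  qed
  then show ?thesis using HA_pos[OF t] by simp
qed

end


lemma mat_mult_entry:
  assumes "A \<in> carrier_mat m k" "B \<in> carrier_mat k p" "i < m" "j < p"
  shows "(A * B) $$ (i, j) = (\<Sum>l<k. A $$ (i, l) * B $$ (l, j))"
  using assms by (simp add: scalar_prod_def atLeast0LessThan)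

lemma det_zero_col:
  fixes A :: "'a::comm_ring_1 mat"
  assumes A: "A \<in> carrier_mat m m" and j: "j < m" and z: "\<And>i. i < m \<Longrightarrow> A $$ (i, j) = 0"
  shows "det A = 0"
  using laplace_expansion_column[OF A j] z by simp

lemma det_pad_zero:
  fixes D C :: "nat \<Rightarrow> nat \<Rightarrow> 'a::comm_ring_1"
  assumes "R < m"
  shows "det (mat m m (\<lambda>(i, j). \<Sum>l<R. D i l * C l j)) = 0"
proof -
  define D' where "D' = mat m m (\<lambda>(i, l). if l < R then D i l else 0)"
  define C' where "C' = mat m m (\<lambda>(l, j). if l < R then C l j else 0)"
  have D': "D' \<in> carrier_mat m m" and C': "C' \<in> carrier_mat m m" unfolding D'_def C'_def by auto
  have eq: "mat m m (\<lambda>(i, j). \<Sum>l<R. D i l * C l j) = D' * C'"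
  proof (rule eq_matI)
    fix i j assume ij: "i < dim_row (D' * C')" "j < dim_col (D' * C')"
    then have ij': "i < m" "j < m" using D' C' by auto
    have "(D' * C') $$ (i, j) = (\<Sum>l<m. D' $$ (i, l) * C' $$ (l, j))"
      by (rule mat_mult_entry[OF D' C' ij'])
    also have "\<dots> = (\<Sum>l<m. if l < R then D i l * C l j else 0)"
      using ij' unfolding D'_def C'_def by (intro sum.cong) auto
    also have "\<dots> = (\<Sum>l\<in>{..<m} \<inter> {l. l < R}. D i l * C l j)"
      by (simp add: sum.inter_restrict)
    also have "{..<m} \<inter> {l. l < R} = {..<R}" using assms by auto
    finally show "mat m m (\<lambda>(i, j). \<Sum>l<R. D i l * C l j) $$ (i, j) = (D' * C') $$ (i, j)"
      using ij' by simp
  qed (use D' C' in auto)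
  have "det D' = 0"
    by (rule det_zero_col[OF D', of "m - 1"]) (use assms in \<open>auto simp: D'_def\<close>)
  then show ?thesis unfolding eq det_mult[OF D' C'] by simp
qed

lemma det_reindex_zero:
  fixes A :: "'a::comm_ring_1 mat"
  assumes A: "A \<in> carrier_mat r r" and d: "det A = 0"
    and f: "\<And>i. i < r \<Longrightarrow> f i < r" and h: "\<And>j. j < r \<Longrightarrow> h j < r"
  shows "det (mat r r (\<lambda>(i, j). A $$ (f i, h j))) = 0"
proof -
  define Pf where "Pf = mat r r (\<lambda>(i, l). if l = f i then 1 else (0::'a))"
  define Ph where "Ph = mat r r (\<lambda>(l, j). if l = h j then 1 else (0::'a))"
  have Pf: "Pf \<in> carrier_mat r r" and Ph: "Ph \<in> carrier_mat r r" unfolding Pf_def Ph_def by auto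
  have PA: "Pf * A \<in> carrier_mat r r" using Pf A by auto
  have e1: "(Pf * A) $$ (i, c) = A $$ (f i, c)" if "i < r" "c < r" for i c
  proof -
    have "(Pf * A) $$ (i, c) = (\<Sum>l<r. Pf $$ (i, l) * A $$ (l, c))" by (rule mat_mult_entry[OF Pf A that])
    also have "\<dots> = (\<Sum>l<r. if l = f i then A $$ (l, c) else 0)"
      using that unfolding Pf_def by (intro sum.cong) auto
    also have "\<dots> = A $$ (f i, c)" using f[OF that(1)] by simp
    finally show ?thesis .
  qed
  have eq: "mat r r (\<lambda>(i, j). A $$ (f i, h j)) = Pf * A * Ph"
  proof (rule eq_matI)
    fix i j assume ij: "i < dim_row (Pf * A * Ph)" "j < dim_col (Pf * A * Ph)"
    then have ij': "i < r" "j < r" using PA Ph by auto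
    have "(Pf * A * Ph) $$ (i, j) = (\<Sum>c<r. (Pf * A) $$ (i, c) * Ph $$ (c, j))"
      by (rule mat_mult_entry[OF PA Ph ij'])
    also have "\<dots> = (\<Sum>c<r. if c = h j then A $$ (f i, c) else 0)"
      using ij' e1 unfolding Ph_def by (intro sum.cong) auto
    also have "\<dots> = A $$ (f i, h j)" using h[OF ij'(2)] by simp
    finally show "mat r r (\<lambda>(i, j). A $$ (f i, h j)) $$ (i, j) = (Pf * A * Ph) $$ (i, j)"
      using ij' by simp
  qed (use PA Ph in auto)
  show ?thesis unfolding eq det_mult[OF PA Ph] det_mult[OF Pf A] d by simp
qed

lemma mccoy:
  fixes A :: "'a::comm_ring_1 mat"
  assumes A: "A \<in> carrier_mat r r"
    and H: "\<And>v. (\<And>c. c < r \<Longrightarrow> (\<Sum>i<r. v i * A $$ (i, c)) = 0) \<Longrightarrow> \<forall>i<r. v i = 0"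
  shows "det A \<noteq> 0"
proof
  assume d0: "det A = 0"
  define sub where "sub t f h = mat t t (\<lambda>(i, j). A $$ (f i, h j))" for t f h
  define P where "P t \<longleftrightarrow> (\<exists>f h. (\<forall>i<t. f i < r) \<and> (\<forall>j<t. h j < r) \<and> inj_on f {..<t} \<and> inj_on h {..<t}
      \<and> det (sub t f h) \<noteq> 0)" for t
  have P0: "P 0"
  proof -
    have "sub 0 id id = 1\<^sub>m 0" unfolding sub_def by (rule eq_matI) auto
    then show ?thesis unfolding P_def by (intro exI[of _ id]) auto
  qed
  have Pb: "t \<le> r" if "P t" for t
  proof -
    from that obtain f where f: "\<forall>i<t. f i < r" "inj_on f {..<t}" unfolding P_def by blast
    have "card {..<t} \<le> card {..<r}"
      by (rule card_inj_on_le[OF f(2)]) (use f(1) in auto)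
    then show ?thesis by simp
  qed
  define t where "t = (GREATEST t. P t)"
  have Pt: "P t" unfolding t_def by (rule GreatestI_nat[where P=P, OF P0]) (use Pb in blast)
  have tmax: "s \<le> t" if "P s" for s unfolding t_def by (rule Greatest_le_nat[where P=P, OF that]) (use Pb in blast)
  from Pt obtain f h where fh: "\<forall>i<t. f i < r" "\<forall>j<t. h j < r" "inj_on f {..<t}" "inj_on h {..<t}"
    and nz: "det (sub t f h) \<noteq> 0" unfolding P_def by blast
  have "t \<noteq> r"
  proof
    assume "t = r"
    then have "det (sub t f h) = 0" unfolding sub_def using det_reindex_zero[OF A d0, of f h] fh by auto
    with nz show False by simp
  qed
  with Pb[OF Pt] have tr: "t < r" by simp
  have "f ` {..<t} \<noteq> {..<r}"
  proof
    assume "f ` {..<t} = {..<r}"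
    then have "card (f ` {..<t}) = r" by simp
    moreover have "card (f ` {..<t}) \<le> t" by (rule order.trans[OF card_image_le]) auto
    ultimately show False using tr by simp
  qed
  moreover have "f ` {..<t} \<subseteq> {..<r}" using fh(1) by auto
  ultimately obtain i0 where i0: "i0 < r" "i0 \<notin> f ` {..<t}" by blast
  define f' where "f' = f(t := i0)"
  have f'r: "\<forall>i<Suc t. f' i < r" using fh(1) i0 unfolding f'_def by (auto simp: less_Suc_eq)
  have f'inj: "inj_on f' {..<Suc t}"
  proof -
    have "inj_on f' {..<t}" using fh(3) unfolding f'_def inj_on_def by auto
    moreover have "f' t \<notin> f' ` {..<t}" using i0 unfolding f'_def by auto
    ultimately show ?thesis by (simp add: lessThan_Suc)
  qed
  define K where "K i = mat t t (\<lambda>(i', j'). A $$ (f' (if i' < i then i' else Suc i'), h j'))" for i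
  define cof where "cof i = (-1) ^ (i + t) * det (K i)" for i
  have detc: "(\<Sum>i<Suc t. A $$ (f' i, c) * cof i) = 0" if c: "c < r" for c
  proof -
    define h' where "h' = h(t := c)"
    define Mc where "Mc = sub (Suc t) f' h'"
    have Mc: "Mc \<in> carrier_mat (Suc t) (Suc t)" unfolding Mc_def sub_def by auto
    have dMc: "det Mc = 0"
    proof (cases "c \<in> h ` {..<t}")
      case True
      then obtain j0 where j0: "j0 < t" "c = h j0" by auto
      show ?thesis
      proof (rule det_identical_columns[OF Mc, of j0 t])
        show "col Mc j0 = col Mc t"
          by (rule eq_vecI) (use j0 in \<open>auto simp: Mc_def sub_def h'_def\<close>)
      qed (use j0 in auto)
    next
      case False
      have h'r: "\<forall>j<Suc t. h' j < r" using fh(2) c unfolding h'_def by (auto simp: less_Suc_eq)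
      have h'inj: "inj_on h' {..<Suc t}"
      proof -
        have "inj_on h' {..<t}" using fh(4) unfolding h'_def inj_on_def by auto
        moreover have "h' t \<notin> h' ` {..<t}" using False unfolding h'_def by auto
        ultimately show ?thesis by (simp add: lessThan_Suc)
      qed
      show ?thesis
      proof (rule ccontr)
        assume "det Mc \<noteq> 0"
        then have "P (Suc t)" unfolding P_def Mc_def using f'r h'r f'inj h'inj by blast
        then show False using tmax by fastforce
      qed
    qed
    have "det Mc = (\<Sum>i<Suc t. Mc $$ (i, t) * cofactor Mc i t)"
      by (rule laplace_expansion_column[OF Mc]) simp
    also have "\<dots> = (\<Sum>i<Suc t. A $$ (f' i, c) * cof i)"
    proof (rule sum.cong[OF refl])
      fix i assume i: "i \<in> {..<Suc t}"
      have "mat_delete Mc i t = K i"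
        unfolding mat_delete_def K_def
        by (rule eq_matI) (use i in \<open>auto simp: Mc_def sub_def h'_def\<close>)
      then show "Mc $$ (i, t) * cofactor Mc i t = A $$ (f' i, c) * cof i"
        using i unfolding cofactor_def cof_def by (simp add: Mc_def sub_def h'_def)
    qed
    finally show ?thesis using dMc by simp
  qed
  define v where "v l = (\<Sum>i<Suc t. if f' i = l then cof i else 0)" for l
  have "\<forall>i<r. v i = 0"
  proof (rule H)
    fix c assume c: "c < r"
    have "(\<Sum>l<r. v l * A $$ (l, c)) = (\<Sum>l<r. \<Sum>i<Suc t. if f' i = l then cof i * A $$ (l, c) else 0)"
      unfolding v_def sum_distrib_right by (intro sum.cong refl) auto
    also have "\<dots> = (\<Sum>i<Suc t. \<Sum>l<r. if f' i = l then cof i * A $$ (l, c) else 0)"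
      by (rule sum.swap)
    also have "\<dots> = (\<Sum>i<Suc t. A $$ (f' i, c) * cof i)"
    proof (rule sum.cong[OF refl])
      fix i assume "i \<in> {..<Suc t}"
      then have "f' i < r" using f'r by auto
      then show "(\<Sum>l<r. if f' i = l then cof i * A $$ (l, c) else 0) = A $$ (f' i, c) * cof i"
        by (simp add: mult.commute)
    qed
    also have "\<dots> = 0" by (rule detc[OF c])
    finally show "(\<Sum>l<r. v l * A $$ (l, c)) = 0" .
  qed
  then have "v i0 = 0" using i0 by blast
  moreover have "v i0 = cof t"
  proof -
    have "v i0 = (\<Sum>i\<in>{t}. if f' i = i0 then cof i else 0)"
      unfolding v_def
    proof (rule sum.mono_neutral_right)
      show "\<forall>i\<in>{..<Suc t} - {t}. (if f' i = i0 then cof i else 0) = 0"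
        using i0 unfolding f'_def by auto
    qed auto
    then show ?thesis by (simp add: f'_def)
  qed
  moreover have "K t = sub t f h"
    unfolding K_def sub_def f'_def by (rule eq_matI) auto
  ultimately have "det (sub t f h) = 0"
    unfolding cof_def by (simp add: power_add[symmetric] mult_2[symmetric])
  with nz show False by simp
qed


context RG
begin

lemma pi0_mult: "hcomp Agr (a * b) 0 = hcomp Agr a 0 * hcomp Agr b 0"
proof -
  interpret AM: RGM phi Agr n x e "(*)" Agr by (rule RGM_self)
  let ?S = "insert 0 {l. hcomp Agr b l \<noteq> 0}"
  have fS: "finite ?S" using comp_fin[OF A_GD] by simp
  have "b = (\<Sum>l\<in>?S. hcomp Agr b l)" by (rule comp_sum_super[OF A_GD fS]) auto
  then have "a * b = (\<Sum>l\<in>?S. a * hcomp Agr b l)" by (metis sum_distrib_left)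
  then have "hcomp Agr (a * b) 0 = (\<Sum>l\<in>?S. hcomp Agr (a * hcomp Agr b l) 0)"
    by (simp add: comp_sum[OF A_GD])
  also have "\<dots> = (\<Sum>l\<in>?S. if l = 0 then hcomp Agr a 0 * hcomp Agr b l else 0)"
    by (intro sum.cong refl) (simp add: AM.comp_sm_homog[OF comp_in[OF A_GD]])
  also have "\<dots> = hcomp Agr a 0 * hcomp Agr b 0" using fS by simp
  finally show ?thesis .
qed

lemma pi0_hom: "comm_ring_hom (\<lambda>a. hcomp Agr a 0)"
proof unfold_locales
  show "hcomp Agr 0 0 = 0" by (simp add: comp_zero[OF A_GD])
  show "hcomp Agr 1 0 = 1" by (simp add: comp_homog[OF A_GD one_A0])
  show "hcomp Agr (a + b) 0 = hcomp Agr a 0 + hcomp Agr b 0" for a b by (rule comp_add[OF A_GD])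
  show "hcomp Agr (a * b) 0 = hcomp Agr a 0 * hcomp Agr b 0" for a b by (rule pi0_mult)
qed

lemma signof_A0: "(signof p :: 'a) \<in> Agr 0"
  by (cases p rule: sign_cases) (simp_all add: one_A0 G_neg[OF A_GD])

lemma det_homog:
  assumes a: "\<And>i c. i < r \<Longrightarrow> c < r \<Longrightarrow> (\<beta> c \<le> d i \<longrightarrow> a i c \<in> Agr (d i - \<beta> c)) \<and> (\<not> \<beta> c \<le> d i \<longrightarrow> a i c = 0)"
    and sums: "(\<Sum>i<r. d i) = (\<Sum>c<r. \<beta> c)"
  shows "det (mat r r (\<lambda>(i, c). a i c)) \<in> Agr 0"
proof -
  have "det (mat r r (\<lambda>(i, c). a i c)) = (\<Sum>p\<in>{p. p permutes {0..<r}}. signof p * (\<Prod>i=0..<r. mat r r (\<lambda>(i, c). a i c) $$ (i, p i)))"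
    by (rule det_def') simp
  also have "\<dots> \<in> Agr 0"
  proof (rule G_sum[OF A_GD])
    fix p assume "p \<in> {p. p permutes {0..<r}}"
    then have p: "p permutes {0..<r}" by simp
    have pr: "p i < r" if "i < r" for i using p that by (simp add: permutes_in_image)
    have "(\<Prod>i=0..<r. mat r r (\<lambda>(i, c). a i c) $$ (i, p i)) = (\<Prod>i=0..<r. a i (p i))"
      by (intro prod.cong refl) (simp add: pr)
    also have "\<dots> \<in> Agr 0"
    proof (cases "\<exists>i<r. \<not> \<beta> (p i) \<le> d i")
      case True
      then obtain i where "i < r" "\<not> \<beta> (p i) \<le> d i" by blast
      then have "a i (p i) = 0" using a[of i "p i"] pr by blast
      then have "(\<Prod>i=0..<r. a i (p i)) = 0" using \<open>i < r\<close> by (intro prod_zero) auto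
      then show ?thesis by (simp add: G_zero[OF A_GD])
    next
      case False
      then have le: "\<And>i. i < r \<Longrightarrow> \<beta> (p i) \<le> d i" by blast
      have "(\<Prod>i=0..<r. a i (p i)) \<in> Agr (\<Sum>i=0..<r. d i - \<beta> (p i))"
        by (rule A_prod) (use a pr le in auto)
      moreover have "(\<Sum>i=0..<r. d i - \<beta> (p i)) = 0"
      proof -
        have "(\<Sum>i=0..<r. d i - \<beta> (p i)) + (\<Sum>i=0..<r. \<beta> (p i)) = (\<Sum>i=0..<r. d i)"
          by (subst sum.distrib[symmetric]) (use le in \<open>auto intro: sum.cong\<close>)
        moreover have "(\<Sum>i=0..<r. \<beta> (p i)) = (\<Sum>i=0..<r. \<beta> i)"
          using sum.permute[OF p, of \<beta>] by (simp add: comp_def)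
        ultimately show ?thesis using sums by (simp add: atLeast0LessThan)
      qed
      ultimately show ?thesis by simp
    qed
    finally show "signof p * (\<Prod>i=0..<r. mat r r (\<lambda>(i, c). a i c) $$ (i, p i)) \<in> Agr 0"
      using A_mult[OF signof_A0] by fastforce
  qed
  finally show ?thesis .
qed

end

context RGM
begin

lemma findep_eq:
  assumes "findep R b" "(\<Sum>l<R. sm (a l) (b l)) = (\<Sum>l<R. sm (a' l) (b l))"
  shows "\<forall>l<R. a l = a' l"
proof -
  have "(\<Sum>l<R. sm (a l - a' l) (b l)) = 0"
    using assms(2) by (simp add: M.scale_left_diff_distrib sum_subtractf)
  then show ?thesis using assms(1) unfolding findep_def
    by (elim allE[of _ "\<lambda>l. a l - a' l"]) simp
qed

lemma span_coeffs:
  fixes R :: nat and b g :: "nat \<Rightarrow> 'm"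
  assumes "M.span (b ` {..<R}) = UNIV"
  obtains a where "\<And>i. g i = (\<Sum>c<R. sm (a i c) (b c))"
proof -
  have "\<forall>i. \<exists>a. g i = (\<Sum>c<R. sm (a c) (b c))"
  proof
    fix i
    have "g i \<in> M.span (b ` {..<R})" using assms by simp
    then show "\<exists>a. g i = (\<Sum>c<R. sm (a c) (b c))" unfolding M.span_fam by blast
  qed
  then obtain a where "\<And>i. g i = (\<Sum>c<R. sm (a i c) (b c))" by metis
  then show ?thesis using that by blast
qed

lemma sum_expand:
  fixes r R :: nat
  shows "(\<Sum>i<r. sm (v i) (\<Sum>c<R. sm (a i c) (b c))) = (\<Sum>c<R. sm (\<Sum>i<r. v i * a i c) (b c))"
  by (simp add: M.scale_sum_right M.scale_sum_left sum.swap[of _ "{..<r}"])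

lemma equality_case:
  assumes hb: "hbasis r b \<beta>" and homg: "homog r g d" and indg: "findep r g"
    and sums: "(\<Sum>i<r. d i) = (\<Sum>c<r. \<beta> c)"
  shows "M.span (g ` {..<r}) = UNIV"
proof -
  from hb have homb: "homog r b \<beta>" and indb: "findep r b" and spb: "M.span (b ` {..<r}) = UNIV"
    unfolding hbasis_def by auto
  obtain a where a: "\<And>i. g i = (\<Sum>c<r. sm (a i c) (b c))" using span_coeffs[OF spb] by blast
  define a' where "a' i c = (if \<beta> c \<le> d i then hcomp Agr (a i c) (d i - \<beta> c) else 0)" for i c
  have g': "g i = (\<Sum>c<r. sm (a' i c) (b c))" if i: "i < r" for i
  proof -
    have "g i = hcomp Mgr (g i) (d i)" using comp_homog[OF M_GD, of "g i" "d i"] homg i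
      unfolding homog_def by simp
    also have "\<dots> = (\<Sum>c<r. hcomp Mgr (sm (a i c) (b c)) (d i))"
      by (subst a) (rule comp_sum[OF M_GD])
    also have "\<dots> = (\<Sum>c<r. sm (a' i c) (b c))"
    proof (intro sum.cong refl)
      fix c assume "c \<in> {..<r}"
      then have "b c \<in> Mgr (\<beta> c)" using homb unfolding homog_def by auto
      then show "hcomp Mgr (sm (a i c) (b c)) (d i) = sm (a' i c) (b c)"
        unfolding a'_def by (simp add: comp_sm_homog)
    qed
    finally show ?thesis .
  qed
  define Am where "Am = mat r r (\<lambda>(i, c). a' i c)"
  have Am: "Am \<in> carrier_mat r r" unfolding Am_def by simp
  have "det Am \<in> Agr 0" unfolding Am_def
    by (rule det_homog[OF _ sums]) (auto simp: a'_def comp_in[OF A_GD])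
  then obtain \<kappa> where \<kappa>: "det Am = phi \<kappa>" using A0 by auto
  have "det Am \<noteq> 0"
  proof (rule mccoy[OF Am])
    fix v assume v: "\<And>c. c < r \<Longrightarrow> (\<Sum>i<r. v i * Am $$ (i, c)) = 0"
    have "(\<Sum>i<r. sm (v i) (g i)) = (\<Sum>i<r. sm (v i) (\<Sum>c<r. sm (a' i c) (b c)))"
      using g' by simp
    also have "\<dots> = (\<Sum>c<r. sm (\<Sum>i<r. v i * a' i c) (b c))" by (rule sum_expand)
    also have "\<dots> = 0" using v by (intro sum.neutral) (simp add: Am_def)
    finally show "\<forall>i<r. v i = 0" using indg unfolding findep_def by blast
  qed
  with \<kappa> have \<kappa>0: "\<kappa> \<noteq> 0" by (auto simp: phi_zero)
  define u where "u = phi (inverse \<kappa>)"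
  have u: "u * det Am = 1" unfolding u_def \<kappa> by (rule phi_inv[OF \<kappa>0])
  have adj: "adj_mat Am * Am = det Am \<cdot>\<^sub>m 1\<^sub>m r" and adjc: "adj_mat Am \<in> carrier_mat r r"
    using adj_mat[OF Am] by auto
  have bspan: "b c \<in> M.span (g ` {..<r})" if c: "c < r" for c
  proof -
    have "(\<Sum>i<r. sm (adj_mat Am $$ (c, i)) (g i)) = (\<Sum>i<r. sm (adj_mat Am $$ (c, i)) (\<Sum>l<r. sm (a' i l) (b l)))"
      using g' by simp
    also have "\<dots> = (\<Sum>l<r. sm (\<Sum>i<r. adj_mat Am $$ (c, i) * a' i l) (b l))" by (rule sum_expand)
    also have "\<dots> = (\<Sum>l<r. sm (if l = c then det Am else 0) (b l))"
    proof (intro sum.cong refl)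
      fix l assume l: "l \<in> {..<r}"
      have "(\<Sum>i<r. adj_mat Am $$ (c, i) * a' i l) = (adj_mat Am * Am) $$ (c, l)"
        using mat_mult_entry[OF adjc Am c, of l] l by (simp add: Am_def)
      also have "\<dots> = (if l = c then det Am else 0)" unfolding adj using c l by auto
      finally show "sm (\<Sum>i<r. adj_mat Am $$ (c, i) * a' i l) (b l) = sm (if l = c then det Am else 0) (b l)"
        by simp
    qed
    also have "\<dots> = sm (det Am) (b c)"
      using c by (simp add: if_distrib[of "\<lambda>z. sm z _"] cong: if_cong)
    finally have "sm u (\<Sum>i<r. sm (adj_mat Am $$ (c, i)) (g i)) = b c"
      using u by (simp add: mult.commute)
    moreover have "(\<Sum>i<r. sm (adj_mat Am $$ (c, i)) (g i)) \<in> M.span (g ` {..<r})"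
      by (intro M.span_sum M.span_scale M.span_base) auto
    ultimately show ?thesis by (metis M.span_scale)
  qed
  have "UNIV = M.span (b ` {..<r})" using spb by simp
  also have "\<dots> \<subseteq> M.span (g ` {..<r})"
    by (rule M.span_minimal) (use bspan M.subspace_span in auto)
  finally show ?thesis by blast
qed

end


context RGM
begin

lemma span_univ_trans: "A \<subseteq> M.span E \<Longrightarrow> M.span A = UNIV \<Longrightarrow> M.span E = UNIV"
  using M.span_minimal[OF _ M.subspace_span, of A E] by auto

lemma hom_gen_exists:
  assumes S: "finite S" "M.span S = UNIV"
  shows "\<exists>m h \<delta>. homog m h \<delta> \<and> M.span (h ` {..<m}) = UNIV"
proof -
  define H where "H = (\<lambda>(s, i). hcomp Mgr s i) ` (Sigma S (\<lambda>s. {i. hcomp Mgr s i \<noteq> 0}))"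
  have "finite (Sigma S (\<lambda>s. {i. hcomp Mgr s i \<noteq> 0}))"
    by (rule finite_SigmaI[OF S(1)]) (rule comp_fin[OF M_GD])
  then have fH: "finite H" unfolding H_def by (rule finite_imageI)
  have Hh: "\<exists>i. y \<in> Mgr i" if "y \<in> H" for y
  proof -
    from that obtain s i where "y = hcomp Mgr s i" unfolding H_def by auto
    then show ?thesis using comp_in[OF M_GD] by blast
  qed
  have "S \<subseteq> M.span H"
  proof
    fix s assume s: "s \<in> S"
    have "s = (\<Sum>i\<in>{i. hcomp Mgr s i \<noteq> 0}. hcomp Mgr s i)"
      by (rule comp_sum_super[OF M_GD comp_fin[OF M_GD]]) simp
    also have "\<dots> \<in> M.span H"
    proof (rule M.span_sum, rule M.span_base)
      fix i assume "i \<in> {i. hcomp Mgr s i \<noteq> 0}"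
      then have "(s, i) \<in> Sigma S (\<lambda>s. {i. hcomp Mgr s i \<noteq> 0})" using s by simp
      then show "hcomp Mgr s i \<in> H" unfolding H_def by (rule rev_image_eqI) simp
    qed
    finally show "s \<in> M.span H" .
  qed
  then have spH: "M.span H = UNIV" using S(2) by (rule span_univ_trans)
  obtain hh where hh: "bij_betw hh {0..<card H} H" using ex_bij_betw_nat_finite[OF fH] by blast
  define \<delta> where "\<delta> k = (SOME i. hh k \<in> Mgr i)" for k
  have "homog (card H) hh \<delta>" unfolding homog_def
  proof (intro allI impI)
    fix k assume "k < card H"
    then have "hh k \<in> H" using hh by (auto simp: bij_betw_def)
    then have "\<exists>i. hh k \<in> Mgr i" using Hh by blast
    then show "hh k \<in> Mgr (\<delta> k)" unfolding \<delta>_def by (rule someI_ex)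
  qed
  moreover have "hh ` {..<card H} = H" using hh by (simp add: bij_betw_def atLeast0LessThan)
  then have "M.span (hh ` {..<card H}) = UNIV" using spH by simp
  ultimately show ?thesis by (intro exI conjI)
qed

lemma min_family:
  assumes "\<exists>m h \<delta>. homog m h \<delta> \<and> M.span (h ` {..<m}) = UNIV"
  obtains m h \<delta> where "homog m h \<delta>" "M.span (h ` {..<m}) = UNIV"
    "\<And>lam. (\<Sum>k<m. sm (lam k) (h k)) = 0 \<Longrightarrow> \<forall>k<m. hcomp Agr (lam k) 0 = 0"
proof -
  define Q where "Q m \<longleftrightarrow> (\<exists>h \<delta>. homog m h \<delta> \<and> M.span (h ` {..<m}) = UNIV)" for m
  define m0 where "m0 = (LEAST m. Q m)"
  have Qm0: "Q m0" unfolding m0_def by (rule LeastI_ex) (use assms in \<open>auto simp: Q_def\<close>)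
  then obtain h \<delta> where hd: "homog m0 h \<delta>" "M.span (h ` {..<m0}) = UNIV" unfolding Q_def by blast
  have minimal: "\<forall>k<m0. hcomp Agr (lam k) 0 = 0" if rel0: "(\<Sum>k<m0. sm (lam k) (h k)) = 0" for lam
  proof (rule ccontr)
    assume "\<not> (\<forall>k<m0. hcomp Agr (lam k) 0 = 0)"
    then obtain k0 where k0: "k0 < m0" "hcomp Agr (lam k0) 0 \<noteq> 0" by blast
    define i where "i = \<delta> k0"
    define c where "c k = (if \<delta> k \<le> i then hcomp Agr (lam k) (i - \<delta> k) else 0)" for k
    have hin: "h k \<in> Mgr (\<delta> k)" if "k < m0" for k using hd(1) that unfolding homog_def by blast
    have "0 = hcomp Mgr (\<Sum>k<m0. sm (lam k) (h k)) i" using rel0 by (simp add: comp_zero[OF M_GD])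
    also have "\<dots> = (\<Sum>k<m0. hcomp Mgr (sm (lam k) (h k)) i)" by (rule comp_sum[OF M_GD])
    also have "\<dots> = (\<Sum>k<m0. sm (c k) (h k))"
      by (intro sum.cong refl) (simp add: comp_sm_homog[OF hin] c_def)
    finally have rel: "(\<Sum>k<m0. sm (c k) (h k)) = 0" by simp
    have "c k0 = hcomp Agr (lam k0) 0" unfolding c_def i_def by simp
    then have "c k0 \<in> Agr 0" "c k0 \<noteq> 0" using comp_in[OF A_GD] k0 by auto
    then obtain \<kappa> where \<kappa>1: "c k0 = phi \<kappa>" using A0 by auto
    with \<open>c k0 \<noteq> 0\<close> have \<kappa>2: "\<kappa> \<noteq> 0" by (auto simp: phi_zero)
    note \<kappa> = \<kappa>1 \<kappa>2
    define E where "E = h ` ({..<m0} - {k0})"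
    have "sm (c k0) (h k0) + (\<Sum>k\<in>{..<m0} - {k0}. sm (c k) (h k)) = 0"
      using rel sum.remove[of "{..<m0}" k0 "\<lambda>k. sm (c k) (h k)"] k0 by simp
    then have "sm (c k0) (h k0) = - (\<Sum>k\<in>{..<m0} - {k0}. sm (c k) (h k))"
      by (simp add: eq_neg_iff_add_eq_0)
    then have "sm (phi (inverse \<kappa>)) (sm (c k0) (h k0)) = sm (phi (inverse \<kappa>)) (- (\<Sum>k\<in>{..<m0} - {k0}. sm (c k) (h k)))"
      by simp
    moreover have "sm (phi (inverse \<kappa>)) (sm (c k0) (h k0)) = h k0"
      using \<kappa> by (simp add: phi_inv)
    ultimately have hk0: "h k0 = sm (phi (inverse \<kappa>)) (- (\<Sum>k\<in>{..<m0} - {k0}. sm (c k) (h k)))" by simp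
    have "h k0 \<in> M.span E" unfolding hk0 E_def
      by (intro M.span_scale M.span_neg M.span_sum M.span_base) auto
    then have "h ` {..<m0} \<subseteq> M.span E" unfolding E_def by (auto intro: M.span_base)
    then have spE: "M.span E = UNIV" using hd(2) by (rule span_univ_trans)
    define h' where "h' j = h (if j < k0 then j else Suc j)" for j
    define \<delta>' where "\<delta>' j = \<delta> (if j < k0 then j else Suc j)" for j
    have "h' ` {..<m0 - 1} = E"
    proof
      show "h' ` {..<m0 - 1} \<subseteq> E" unfolding E_def h'_def using k0 by auto
      show "E \<subseteq> h' ` {..<m0 - 1}"
      proof
        fix y assume "y \<in> E"
        then obtain k where k: "k < m0" "k \<noteq> k0" "y = h k" unfolding E_def by auto
        show "y \<in> h' ` {..<m0 - 1}"
        proof (cases "k < k0")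
          case True then show ?thesis using k k0 unfolding h'_def by (intro image_eqI[of _ _ k]) auto
        next
          case False then show ?thesis using k k0 unfolding h'_def by (intro image_eqI[of _ _ "k - 1"]) auto
        qed
      qed
    qed
    moreover have "homog (m0 - 1) h' \<delta>'" unfolding homog_def h'_def \<delta>'_def using hd(1) k0
      unfolding homog_def by auto
    ultimately have "Q (m0 - 1)" unfolding Q_def using spE by blast
    then have "m0 \<le> m0 - 1" unfolding m0_def by (rule Least_le)
    then show False using k0 by simp
  qed
  show ?thesis using that[OF hd] minimal by blast
qed

lemma fin_basis:
  fixes h :: "nat \<Rightarrow> 'm"
  assumes B: "M.independent B" "M.span B = UNIV" and hsp: "M.span (h ` {..<m}) = UNIV"
  obtains R bb where "findep R bb" "M.span (bb ` {..<R}) = UNIV"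
proof -
  have "\<forall>k. \<exists>T. finite T \<and> T \<subseteq> B \<and> h k \<in> M.span T"
  proof
    fix k
    have "h k \<in> M.span B" using B by simp
    then obtain t r where t: "finite t" "t \<subseteq> B" "h k = (\<Sum>a\<in>t. sm (r a) a)"
      unfolding M.span_explicit by blast
    have "h k \<in> M.span t" unfolding t(3) by (intro M.span_sum M.span_scale M.span_base)
    then show "\<exists>T. finite T \<and> T \<subseteq> B \<and> h k \<in> M.span T" using t by blast
  qed
  then obtain T where "\<forall>k. finite (T k) \<and> T k \<subseteq> B \<and> h k \<in> M.span (T k)" by (rule choice[THEN exE]) blast
  then have T: "\<And>k. finite (T k)" "\<And>k. T k \<subseteq> B" "\<And>k. h k \<in> M.span (T k)" by auto
  define TT where "TT = (\<Union>k<m. T k)"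
  have fTT: "finite TT" unfolding TT_def using T(1) by auto
  have TTB: "TT \<subseteq> B" unfolding TT_def using T(2) by auto
  have "h ` {..<m} \<subseteq> M.span TT"
  proof clarify
    fix k assume "k < m"
    then have "T k \<subseteq> TT" unfolding TT_def by auto
    then show "h k \<in> M.span TT" using T(3)[of k] M.span_mono by blast
  qed
  then have spTT: "M.span TT = UNIV" using hsp by (rule span_univ_trans)
  obtain bb where bb: "bij_betw bb {0..<card TT} TT" using ex_bij_betw_nat_finite[OF fTT] by blast
  define R where "R = card TT"
  have bbi: "inj_on bb {..<R}" and bbim: "bb ` {..<R} = TT"
    using bb unfolding R_def bij_betw_def by (auto simp: atLeast0LessThan)
  have "findep R bb" unfolding findep_def
  proof (intro allI impI)
    fix lam j assume s: "(\<Sum>j<R. sm (lam j) (bb j)) = 0" and j: "j < R"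
    define u where "u v = lam (the_inv_into {..<R} bb v)" for v
    have "(\<Sum>v\<in>TT. sm (u v) v) = (\<Sum>j<R. sm (u (bb j)) (bb j))"
      unfolding bbim[symmetric] by (rule sum.reindex[OF bbi, unfolded comp_def])
    also have "\<dots> = (\<Sum>j<R. sm (lam j) (bb j))"
      unfolding u_def by (intro sum.cong refl) (simp add: the_inv_into_f_f[OF bbi])
    finally have "(\<Sum>v\<in>TT. sm (u v) v) = 0" using s by simp
    from M.independentD[OF M.independent_mono[OF B(1) TTB] fTT order_refl this, of "bb j"]
    have "u (bb j) = 0" using j bbim by auto
    then show "lam j = 0" unfolding u_def using j by (simp add: the_inv_into_f_f[OF bbi])
  qed
  moreover have "M.span (bb ` {..<R}) = UNIV" using spTT bbim by simp
  ultimately show ?thesis using that by blast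
qed

lemma minimal_is_basis:
  fixes h bb :: "nat \<Rightarrow> 'm"
  assumes hsp: "M.span (h ` {..<m}) = UNIV"
    and hmin: "\<And>lam. (\<Sum>k<m. sm (lam k) (h k)) = 0 \<Longrightarrow> \<forall>k<m. hcomp Agr (lam k) 0 = 0"
    and bbi: "findep R bb" and bbs: "M.span (bb ` {..<R}) = UNIV"
  shows "findep m h"
proof -
  interpret pi: comm_ring_hom "\<lambda>a. hcomp Agr a 0" by (rule pi0_hom)
  obtain D where D: "\<And>k. h k = (\<Sum>c<R. sm (D k c) (bb c))" using span_coeffs[OF bbs] by blast
  obtain C where C: "\<And>c. bb c = (\<Sum>k<m. sm (C c k) (h k))" using span_coeffs[OF hsp] by blast
  have CD: "(\<Sum>k<m. C c k * D k l) = (if c = l then 1 else 0)" if c: "c < R" and l: "l < R" for c l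
  proof -
    have "(\<Sum>l<R. sm (\<Sum>k<m. C c k * D k l) (bb l)) = (\<Sum>k<m. sm (C c k) (\<Sum>l<R. sm (D k l) (bb l)))"
      by (rule sum_expand[symmetric])
    also have "\<dots> = (\<Sum>k<m. sm (C c k) (h k))" by (simp only: D[symmetric])
    also have "\<dots> = bb c" by (rule C[symmetric])
    also have "\<dots> = (\<Sum>l<R. sm (if c = l then 1 else 0) (bb l))"
      using c by (simp add: if_distrib[of "\<lambda>z. sm z _"] cong: if_cong)
    finally have e: "(\<Sum>l<R. sm (\<Sum>k<m. C c k * D k l) (bb l)) = (\<Sum>l<R. sm (if c = l then 1 else 0) (bb l))" .
    show ?thesis using findep_eq[OF bbi e, rule_format, OF l] .
  qed
  have DC: "hcomp Agr (\<Sum>l<R. D k l * C l j) 0 = (if k = j then 1 else 0)" if k: "k < m" and j: "j < m" for k j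
  proof -
    have "(\<Sum>j<m. sm (\<Sum>l<R. D k l * C l j) (h j)) = (\<Sum>l<R. sm (D k l) (\<Sum>j<m. sm (C l j) (h j)))"
      by (rule sum_expand[symmetric])
    also have "\<dots> = (\<Sum>l<R. sm (D k l) (bb l))" by (simp only: C[symmetric])
    also have "\<dots> = h k" by (rule D[symmetric])
    also have "\<dots> = (\<Sum>j<m. sm (if k = j then 1 else 0) (h j))"
      using k by (simp add: if_distrib[of "\<lambda>z. sm z _"] cong: if_cong)
    finally have "(\<Sum>j<m. sm ((\<Sum>l<R. D k l * C l j) - (if k = j then 1 else 0)) (h j)) = 0"
      by (simp add: M.scale_left_diff_distrib sum_subtractf)
    from hmin[OF this, rule_format, OF j] have "hcomp Agr ((\<Sum>l<R. D k l * C l j) - (if k = j then 1 else 0)) 0 = 0" .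
    then show ?thesis using comp_diff[OF A_GD] pi.hom_one pi.hom_zero by (auto split: if_splits)
  qed
  have mR: "\<not> R < m"
  proof
    assume Rm: "R < m"
    define X where "X = mat m m (\<lambda>(k, j). \<Sum>l<R. D k l * C l j)"
    have "det X = 0" unfolding X_def by (rule det_pad_zero[OF Rm])
    moreover have "map_mat (\<lambda>a. hcomp Agr a 0) X = 1\<^sub>m m"
      unfolding X_def by (rule eq_matI) (auto simp: DC)
    then have "hcomp Agr (det X) 0 = 1" using pi.hom_det[of X] by simp
    ultimately show False by (simp add: comp_zero[OF A_GD])
  qed
  have Rm: "\<not> m < R"
  proof
    assume mR: "m < R"
    define Y where "Y = mat R R (\<lambda>(c, l). \<Sum>k<m. C c k * D k l)"
    have "det Y = 0" unfolding Y_def by (rule det_pad_zero[OF mR])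
    moreover have "Y = 1\<^sub>m R" unfolding Y_def by (rule eq_matI) (auto simp: CD)
    ultimately show False by simp
  qed
  then have mR': "m = R" using mR by simp
  define Cm where "Cm = mat R R (\<lambda>(c, k). C c k)"
  define Dm where "Dm = mat R R (\<lambda>(k, l). D k l)"
  have Cm: "Cm \<in> carrier_mat R R" and Dm: "Dm \<in> carrier_mat R R" unfolding Cm_def Dm_def by auto
  have "Cm * Dm = 1\<^sub>m R"
  proof (rule eq_matI)
    fix c l assume "c < dim_row (1\<^sub>m R)" "l < dim_col (1\<^sub>m R)"
    then have cl: "c < R" "l < R" by auto
    have "(Cm * Dm) $$ (c, l) = (\<Sum>k<R. C c k * D k l)"
      using mat_mult_entry[OF Cm Dm cl] cl by (simp add: Cm_def Dm_def)
    then show "(Cm * Dm) $$ (c, l) = 1\<^sub>m R $$ (c, l)" using CD[OF cl] mR' cl by simp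
  qed (use Cm Dm in auto)
  then have detCD: "det Cm * det Dm = 1" using det_mult[OF Cm Dm] by simp
  have adjD: "Dm * adj_mat Dm = det Dm \<cdot>\<^sub>m 1\<^sub>m R" and adjc: "adj_mat Dm \<in> carrier_mat R R"
    using adj_mat[OF Dm] by auto
  show "findep m h" unfolding findep_def
  proof (intro allI impI)
    fix lam k' assume s: "(\<Sum>k<m. sm (lam k) (h k)) = 0" and k': "k' < m"
    have "(\<Sum>l<R. sm (\<Sum>k<m. lam k * D k l) (bb l)) = (\<Sum>k<m. sm (lam k) (\<Sum>l<R. sm (D k l) (bb l)))"
      by (rule sum_expand[symmetric])
    also have "\<dots> = 0" using s D by simp
    finally have z: "\<forall>l<R. (\<Sum>k<m. lam k * D k l) = 0"
      using bbi unfolding findep_def by (elim allE[of _ "\<lambda>l. \<Sum>k<m. lam k * D k l"]) simp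
    have "lam k' * det Dm = (\<Sum>k<R. lam k * (Dm * adj_mat Dm) $$ (k, k'))"
    proof -
      have "(\<Sum>k<R. lam k * (Dm * adj_mat Dm) $$ (k, k')) = (\<Sum>k<R. if k = k' then lam k * det Dm else 0)"
        using k' mR' unfolding adjD by (intro sum.cong refl) auto
      also have "\<dots> = lam k' * det Dm" using k' mR' by simp
      finally show ?thesis by simp
    qed
    also have "\<dots> = (\<Sum>k<R. lam k * (\<Sum>l<R. D k l * adj_mat Dm $$ (l, k')))"
    proof (intro sum.cong refl)
      fix k assume k: "k \<in> {..<R}"
      have "(Dm * adj_mat Dm) $$ (k, k') = (\<Sum>l<R. Dm $$ (k, l) * adj_mat Dm $$ (l, k'))"
        using mat_mult_entry[OF Dm adjc, of k k'] k k' mR' by simp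
      also have "\<dots> = (\<Sum>l<R. D k l * adj_mat Dm $$ (l, k'))"
        using k by (intro sum.cong refl) (simp add: Dm_def)
      finally show "lam k * (Dm * adj_mat Dm) $$ (k, k') = lam k * (\<Sum>l<R. D k l * adj_mat Dm $$ (l, k'))"
        by simp
    qed
    also have "\<dots> = (\<Sum>k<R. \<Sum>l<R. lam k * D k l * adj_mat Dm $$ (l, k'))"
      by (simp add: sum_distrib_left mult.assoc)
    also have "\<dots> = (\<Sum>l<R. \<Sum>k<R. lam k * D k l * adj_mat Dm $$ (l, k'))"
      by (rule sum.swap)
    also have "\<dots> = (\<Sum>l<R. (\<Sum>k<R. lam k * D k l) * adj_mat Dm $$ (l, k'))"
      by (simp add: sum_distrib_right)
    also have "\<dots> = 0" using z mR' by simp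
    finally have "lam k' * det Dm = 0" .
    then have "lam k' * (det Cm * det Dm) = 0" by (simp add: mult.left_commute)
    then show "lam k' = 0" using detCD by simp
  qed
qed

lemma hbasis_exists:
  assumes fg: "\<exists>S. finite S \<and> M.span S = UNIV" and fr: "\<exists>B. M.independent B \<and> M.span B = UNIV"
  obtains R b \<beta> where "hbasis R b \<beta>"
proof -
  from fg obtain S where S: "finite S" "M.span S = UNIV" by blast
  obtain m h \<delta> where hd: "homog m h \<delta>" "M.span (h ` {..<m}) = UNIV"
    and hmin: "\<And>lam. (\<Sum>k<m. sm (lam k) (h k)) = 0 \<Longrightarrow> \<forall>k<m. hcomp Agr (lam k) 0 = 0"
    by (rule min_family[OF hom_gen_exists[OF S]]) blast
  from fr obtain B where "M.independent B" "M.span B = UNIV" by blast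
  from fin_basis[OF this hd(2)] obtain R bb where "findep R bb" "M.span (bb ` {..<R}) = UNIV" .
  from minimal_is_basis[OF hd(2) hmin this] have "findep m h" .
  then have "hbasis m h \<delta>" unfolding hbasis_def using hd by blast
  then show ?thesis by (rule that)
qed

end


theorem proposition2p2:
  fixes phi :: "'k::field \<Rightarrow> 'a::comm_ring_1"
    and Agr :: "nat \<Rightarrow> 'a set"
    and sm :: "'a \<Rightarrow> 'm::ab_group_add \<Rightarrow> 'm"
    and Mgr :: "nat \<Rightarrow> 'm set"
    and r :: nat
    and g :: "nat \<Rightarrow> 'm"
    and d :: "nat \<Rightarrow> nat"
  assumes A_regular: "regular_graded_algebra phi Agr"
    and M_graded: "graded_module Agr sm Mgr"
    and M_fin_gen: "\<exists>S. finite S \<and> module.span sm S = UNIV"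
    and M_free: "\<exists>B. module.independent sm B \<and> module.span sm B = UNIV"
    and r_def: "real r = rank_inv phi Agr sm Mgr"
    and g_homog: "\<forall>i<r. g i \<in> Mgr (d i)"
    and g_indep: "\<forall>a. (\<Sum>i<r. sm (a i) (g i)) = 0 \<longrightarrow> (\<forall>i<r. a i = 0)"
  shows "(\<Sum>i<r. real (d i)) \<ge> s_inv phi Agr sm Mgr
    \<and> ((\<Sum>i<r. real (d i)) = s_inv phi Agr sm Mgr \<longleftrightarrow> module.span sm (g ` {..<r}) = UNIV)"
proof -
  have conn: "connected_graded_algebra phi Agr"
    and ex: "\<exists>n x e. (\<forall>j<n. 0 < e j \<and> x j \<in> Agr (e j)) \<and>
        (\<forall>a. \<exists>F c. finite F \<and> F \<subseteq> exponents n \<and>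
              a = (\<Sum>alpha\<in>F. phi (c alpha) * monomial_in n x alpha)) \<and>
        (\<forall>F c. finite F \<longrightarrow> F \<subseteq> exponents n \<longrightarrow>
              (\<Sum>alpha\<in>F. phi (c alpha) * monomial_in n x alpha) = 0 \<longrightarrow>
              (\<forall>alpha\<in>F. c alpha = 0))"
    using A_regular unfolding regular_graded_algebra_def by auto
  from ex obtain n x e where H: "(\<forall>j<n. 0 < e j \<and> x j \<in> Agr (e j)) \<and>
        (\<forall>a. \<exists>F c. finite F \<and> F \<subseteq> exponents n \<and>
              a = (\<Sum>alpha\<in>F. phi (c alpha) * monomial_in n x alpha)) \<and>
        (\<forall>F c. finite F \<longrightarrow> F \<subseteq> exponents n \<longrightarrow>
              (\<Sum>alpha\<in>F. phi (c alpha) * monomial_in n x alpha) = 0 \<longrightarrow>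
              (\<forall>alpha\<in>F. c alpha = 0))" by (elim exE) (rule that)
  note xe = conjunct1[OF H] and sp = conjunct1[OF conjunct2[OF H]] and ind = conjunct2[OF conjunct2[OF H]]
  interpret RGM phi Agr n x e sm Mgr
  proof unfold_locales
    show "connected_graded_algebra phi Agr" by (rule conn)
    show "\<And>j. j < n \<Longrightarrow> 0 < e j \<and> x j \<in> Agr (e j)" by (rule xe[rule_format])
    show "\<And>a. \<exists>F c. finite F \<and> F \<subseteq> exponents n \<and> a = (\<Sum>\<alpha>\<in>F. phi (c \<alpha>) * monomial_in n x \<alpha>)"
      by (rule sp[rule_format])
    show "\<And>F c \<alpha>. finite F \<Longrightarrow> F \<subseteq> exponents n \<Longrightarrow>
        (\<Sum>\<alpha>\<in>F. phi (c \<alpha>) * monomial_in n x \<alpha>) = 0 \<Longrightarrow> \<alpha> \<in> F \<Longrightarrow> c \<alpha> = 0"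
      by (rule ind[rule_format])
    show "graded_module Agr sm Mgr" by (rule M_graded)
  qed
  obtain R b \<beta> where hb: "hbasis R b \<beta>" using hbasis_exists[OF M_fin_gen M_free] by blast
  note rs = rank_s[OF hb]
  have rR: "r = R" using r_def rs(1) by simp
  have homg: "homog r g d" unfolding homog_def using g_homog by blast
  have indg: "findep r g" unfolding findep_def using g_indep by blast
  have sumd: "(\<Sum>i<r. real (d i)) = real (\<Sum>i<r. d i)" by simp
  have ineq: "real (\<Sum>j<R. \<beta> j) \<le> real (\<Sum>j<r. d j)"
  proof (rule tendsto_le[OF _ poly_lim[where R=r and \<beta>=d] poly_lim[where R=R and \<beta>=\<beta>]])
    show "at_left (1::real) \<noteq> bot" by (simp add: trivial_limit_at_left_real)
    have ev: "eventually (\<lambda>t. t \<in> {0<..<1::real}) (at_left 1)" by (rule eventually_at_left_real) simp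
    show "eventually (\<lambda>t. ((\<Sum>j<R. t ^ \<beta> j) - real R) / (t - 1) \<le> ((\<Sum>j<r. t ^ d j) - real r) / (t - 1)) (at_left 1)"
      using ev
    proof (rule eventually_mono)
      fix t :: real assume t: "t \<in> {0<..<1}"
      have t0: "0 < t" and t1: "t < 1" using t by auto
      have "(\<Sum>j<r. t ^ d j) \<le> (\<Sum>j<R. t ^ \<beta> j)" by (rule ineq_series[OF t0 t1 hb homg indg])
      then have le: "(\<Sum>j<r. t ^ d j) - real r \<le> (\<Sum>j<R. t ^ \<beta> j) - real R" unfolding rR by linarith
      have "t - 1 \<le> 0" using t1 by linarith
      with le show "((\<Sum>j<R. t ^ \<beta> j) - real R) / (t - 1) \<le> ((\<Sum>j<r. t ^ d j) - real r) / (t - 1)"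
        by (rule divide_right_mono_neg)
    qed
  qed
  have part1: "(\<Sum>i<r. real (d i)) \<ge> s_inv phi Agr sm Mgr" using ineq rs(2) sumd by linarith
  have part2: "(\<Sum>i<r. real (d i)) = s_inv phi Agr sm Mgr \<longleftrightarrow> module.span sm (g ` {..<r}) = UNIV"
  proof
    assume "(\<Sum>i<r. real (d i)) = s_inv phi Agr sm Mgr"
    then have "real (\<Sum>i<r. d i) = real (\<Sum>c<R. \<beta> c)" using rs(2) sumd by linarith
    then have "(\<Sum>i<r. d i) = (\<Sum>c<R. \<beta> c)" by (simp only: of_nat_eq_iff)
    then have e1: "(\<Sum>i<r. d i) = (\<Sum>c<r. \<beta> c)" using rR by simp
    have e2: "hbasis r b \<beta>" using hb rR by simp
    show "module.span sm (g ` {..<r}) = UNIV" by (rule equality_case[OF e2 homg indg e1])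
  next
    assume "module.span sm (g ` {..<r}) = UNIV"
    then have "hbasis r g d" by (simp add: hbasis_def homg indg)
    from rank_s(2)[OF this] show "(\<Sum>i<r. real (d i)) = s_inv phi Agr sm Mgr" using sumd by linarith
  qed
  show ?thesis by (rule conjI[OF part1 part2])
qed

end
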